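(* In the setting of a mixture path $p_t(x^i|x_1^i)=(1-\kappa_t(x_1^i))p(x^i)+\kappa_t(x_1^i)\delta_{x_1^i}(x^i)$ on $\mathcal{T}$ with $\kappa_0\equiv0$, $\kappa_t(\cdot)\to1$ as $t\to1$, $\kappa_t$ nondecreasing and $\kappa_t(y)<1$ for $t<1$, conditional velocity $u_t(x^i,z^i|x_1^i)=\lambda_t(x_1^i)(\delta_{x_1^i}(x^i)-\delta_{z^i}(x^i))$ with $\lambda_t(y)=\frac{\dot\kappa_t(y)}{1-\kappa_t(y)}$, and model velocity $u^i_t(x^i,z)=\lambda_t(x^i)p^{\theta,i}_{1|t}(x^i|z)-\delta_{z^i}(x^i)\sum_{y}\lambda_t(y)p^{\theta,i}_{1|t}(y|z)$ for a strictly positive model posterior $p^{\theta,i}_{1|t}(\cdot|z)$ on $\mathcal{T}$, the model $p^\theta_1$ (CTMC from $\prod_ip(x^i)$ with this factorized velocity) satisfies $$\log p^\theta_1(x_1)\ge\int_0^1\mathbb{E}_{x_t\sim p_t(\cdot|x_1)}\sum_{i=1}^D\Big[\lambda_t(x_t^i)p^{\theta,i}_{1|t}(x_t^i|x_t)-\sum_{y^i}\lambda_t(y^i)p^{\theta,i}_{1|t}(y^i|x_t)+(1-\delta_{x_1^i}(x_t^i))\lambda_t(x_1^i)\big(1+\log p^{\theta,i}_{1|t}(x_1^i|x_t)\big)\Big]dt.$$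
   Context: $\mathcal{S}=\mathcal{T}^D$, $p_t(x|x_1)=\prod_ip_t(x^i|x_1^i)$, $\delta_y(x)=1$ if $x=y$ and $0$ otherwise. The factorized velocity on $\mathcal{S}$ is $u_t(x,z)=\sum_iu^i_t(x^i,z)\prod_{j\ne i}\delta_{z^j}(x^j)$. *)

theory Defs
  imports "HOL-Analysis.Analysis"
begin

text \<open>Token set T = type 'a (finite); dimension index set {1..D} = type 'i (finite);
  states of S = T^D are functions 'i => 'a.
  kappa t y is the scheduler kappa_t(y); dkappa t y its time derivative.
  q i t z y is the model posterior p^{theta,i}_{1|t}(y | z).\<close>

definition delta :: "'a \<Rightarrow> 'a \<Rightarrow> real" where
  "delta y x = (if x = y then 1 else 0)"

definition sched_rate :: "(real \<Rightarrow> 'a \<Rightarrow> real) \<Rightarrow> (real \<Rightarrow> 'a \<Rightarrow> real) \<Rightarrow> real \<Rightarrow> 'a \<Rightarrow> real" where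
  "sched_rate kappa dkappa t y = dkappa t y / (1 - kappa t y)"

definition model_vel_i :: "(real \<Rightarrow> 'a::finite \<Rightarrow> real) \<Rightarrow> ('i \<Rightarrow> real \<Rightarrow> ('i \<Rightarrow> 'a) \<Rightarrow> 'a \<Rightarrow> real)
    \<Rightarrow> 'i \<Rightarrow> real \<Rightarrow> 'a \<Rightarrow> ('i \<Rightarrow> 'a) \<Rightarrow> real" where
  "model_vel_i lam q i t xi z =
     lam t xi * q i t z xi - delta (z i) xi * (\<Sum>y\<in>UNIV. lam t y * q i t z y)"

text \<open>Factorized velocity on S: u_t(x,z) = sum_i u^i_t(x^i,z) prod_{j ~= i} delta_{z^j}(x^j)
  (rate of jumping from z to x).\<close>
definition fact_vel :: "('i::finite \<Rightarrow> real \<Rightarrow> 'a \<Rightarrow> ('i \<Rightarrow> 'a) \<Rightarrow> real)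
    \<Rightarrow> real \<Rightarrow> ('i \<Rightarrow> 'a) \<Rightarrow> ('i \<Rightarrow> 'a) \<Rightarrow> real" where
  "fact_vel ui t x z = (\<Sum>i\<in>UNIV. ui i t (x i) z * (\<Prod>j\<in>UNIV - {i}. delta (z j) (x j)))"

definition mix_path_i :: "('a \<Rightarrow> real) \<Rightarrow> (real \<Rightarrow> 'a \<Rightarrow> real) \<Rightarrow> real \<Rightarrow> 'a \<Rightarrow> 'a \<Rightarrow> real" where
  "mix_path_i p kappa t xi x1i = (1 - kappa t x1i) * p xi + kappa t x1i * delta x1i xi"

definition mix_path :: "('a \<Rightarrow> real) \<Rightarrow> (real \<Rightarrow> 'a \<Rightarrow> real) \<Rightarrow> real \<Rightarrow> ('i::finite \<Rightarrow> 'a) \<Rightarrow> ('i \<Rightarrow> 'a) \<Rightarrow> real" where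
  "mix_path p kappa t x x1 = (\<Prod>i\<in>UNIV. mix_path_i p kappa t (x i) (x1 i))"

text \<open>P is the marginal of the CTMC started at distribution p0 with velocity u on [0,1):
  it solves the Kolmogorov forward equation d/dt P_t(x) = sum_z u_t(x,z) P_t(z) on [0,1),
  P_0 = p0, and P_1 is the limit of P_t as t -> 1 from the left.\<close>
definition ctmc_marginal :: "(real \<Rightarrow> 's::finite \<Rightarrow> 's \<Rightarrow> real) \<Rightarrow> ('s \<Rightarrow> real) \<Rightarrow> (real \<Rightarrow> 's \<Rightarrow> real) \<Rightarrow> bool" where
  "ctmc_marginal u p0 P \<longleftrightarrow>
     (\<forall>x. P 0 x = p0 x) \<and>
     (\<forall>x. \<forall>t\<in>{0..<1}. ((\<lambda>s. P s x) has_real_derivative (\<Sum>z\<in>UNIV. u t x z * P t z)) (at t within {0..<1})) \<and>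
     (\<forall>x. ((\<lambda>t. P t x) \<longlongrightarrow> P 1 x) (at_left 1))"

definition elbo_integrand :: "('a::finite \<Rightarrow> real) \<Rightarrow> (real \<Rightarrow> 'a \<Rightarrow> real) \<Rightarrow> (real \<Rightarrow> 'a \<Rightarrow> real)
    \<Rightarrow> ('i::finite \<Rightarrow> real \<Rightarrow> ('i \<Rightarrow> 'a) \<Rightarrow> 'a \<Rightarrow> real) \<Rightarrow> ('i \<Rightarrow> 'a) \<Rightarrow> real \<Rightarrow> real" where
  "elbo_integrand p kappa dkappa q x1 t =
     (let lam = sched_rate kappa dkappa in
      \<Sum>x\<in>UNIV. mix_path p kappa t x x1 *
        (\<Sum>i\<in>UNIV. lam t (x i) * q i t x (x i) - (\<Sum>y\<in>UNIV. lam t y * q i t x y)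
                   + (1 - delta (x1 i) (x i)) * lam t (x1 i) * (1 + ln (q i t x (x1 i)))))"

end

theory Submission
  imports Defs
begin

lemma fiber_sum:
  fixes g :: "('i::finite \<Rightarrow> 'a::finite) \<Rightarrow> 'b::comm_monoid_add"
  shows "(\<Sum>z\<in>UNIV. g z) = (\<Sum>x\<in>{x. x i = c}. \<Sum>w\<in>UNIV. g (x(i:=w)))"
proof -
  have "(\<Sum>x\<in>{x. x i = c}. \<Sum>w\<in>UNIV. g (x(i:=w))) = (\<Sum>(x,w)\<in>{x. x i = c} \<times> UNIV. g (x(i:=w)))"
    by (simp add: sum.cartesian_product)
  also have "\<dots> = (\<Sum>z\<in>UNIV. g z)"
    apply (rule sum.reindex_bij_witness[where i="\<lambda>z. (z(i:=c), z i)" and j="\<lambda>(x,w). x(i:=w)"])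
    apply simp_all
    apply (clarsimp simp: fun_upd_idem)
    apply auto
    done
  finally show ?thesis by simp
qed
lemma swap_sum:
  fixes G :: "('i::finite \<Rightarrow> 'a::finite) \<Rightarrow> 'a \<Rightarrow> 'b::comm_monoid_add"
  shows "(\<Sum>x\<in>UNIV. \<Sum>w\<in>UNIV. G (x(i:=w)) (x i)) = (\<Sum>z\<in>UNIV. \<Sum>y\<in>UNIV. G z y)"
proof -
  have "(\<Sum>x\<in>UNIV. \<Sum>w\<in>UNIV. G (x(i:=w)) (x i)) = (\<Sum>(x,w)\<in>UNIV \<times> UNIV. G (x(i:=w)) (x i))"
    by (simp add: sum.cartesian_product)
  also have "\<dots> = (\<Sum>(z,y)\<in>UNIV \<times> UNIV. G z y)"
    by (rule sum.reindex_bij_witness[where i="\<lambda>(z,y). (z(i:=y), z i)" and j="\<lambda>(x,w). (x(i:=w), x i)"]) auto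
  also have "\<dots> = (\<Sum>z\<in>UNIV. \<Sum>y\<in>UNIV. G z y)"
    by (simp add: sum.cartesian_product)
  finally show ?thesis .
qed



lemma comparison:
  fixes W dW e :: "real \<Rightarrow> 's::finite \<Rightarrow> real" and A :: "real \<Rightarrow> 's \<Rightarrow> 'j::finite \<Rightarrow> real"
    and \<sigma> :: "'s \<Rightarrow> 'j \<Rightarrow> 's"
  assumes T: "0 \<le> T"
  and der: "\<And>x t. t \<in> {0..T} \<Longrightarrow> ((\<lambda>s. W s x) has_real_derivative dW t x) (at t within {0..T})"
  and ge: "\<And>x t. t \<in> {0..T} \<Longrightarrow> dW t x \<ge> (\<Sum>j\<in>UNIV. A t x j * W t (\<sigma> x j)) - e t x * W t x"
  and Apos: "\<And>x j t. t \<in> {0..T} \<Longrightarrow> A t x j \<ge> 0"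
  and Abd: "\<And>x t. t \<in> {0..T} \<Longrightarrow> (\<Sum>j\<in>UNIV. A t x j) \<le> K"
  and epos: "\<And>x t. t \<in> {0..T} \<Longrightarrow> e t x \<ge> 0"
  and init: "\<And>x. W 0 x \<ge> 0"
  shows "\<forall>t\<in>{0..T}. \<forall>x. W t x \<ge> 0"
proof -
  define C where "C = max K 0 + 1"
  have main: "\<forall>t\<in>{0..T}. \<forall>x. W t x + \<delta> * exp (C*t) > 0" if \<delta>: "\<delta> > 0" for \<delta>
  proof (rule ccontr)
    define V where "V t x = W t x + \<delta> * exp (C*t)" for t x
    define Z where "Z = {t\<in>{0..T}. \<exists>x. V t x \<le> 0}"
    assume "\<not> (\<forall>t\<in>{0..T}. \<forall>x. W t x + \<delta> * exp (C*t) > 0)"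
    then have Zne: "Z \<noteq> {}" by (auto simp: Z_def V_def not_less)
    have derV: "((\<lambda>s. V s x) has_real_derivative (dW t x + \<delta> * (C * exp (C*t)))) (at t within {0..T})"
      if "t \<in> {0..T}" for t x
      unfolding V_def using der[OF that]
      by (auto intro!: derivative_eq_intros)
    have contV: "continuous_on {0..T} (\<lambda>t. V t x)" for x
      using derV by (meson DERIV_continuous continuous_on_eq_continuous_within)
    have "Z = (\<Union>x. {t\<in>{0..T}. V t x \<le> 0})" by (auto simp: Z_def)
    moreover have "closed {t\<in>{0..T}. V t x \<le> 0}" for x
      using continuous_on_closed_Collect_le[OF contV continuous_on_const, of x 0] by simp
    ultimately have clZ: "closed Z" by (simp add: closed_UN)
    have bdd: "bdd_below Z" unfolding Z_def by (rule bdd_belowI[of _ 0]) auto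
    define t0 where "t0 = Inf Z"
    have t0Z: "t0 \<in> Z" unfolding t0_def using closed_contains_Inf[OF Zne bdd clZ] .
    then obtain x0 where t0T: "t0 \<in> {0..T}" and x0: "V t0 x0 \<le> 0" by (auto simp: Z_def)
    have before: "V s x > 0" if "s \<in> {0..T}" "s < t0" for s x
    proof (rule ccontr)
      assume "\<not> V s x > 0"
      then have "s \<in> Z" using that unfolding Z_def not_less by blast
      then have "t0 \<le> s" unfolding t0_def by (rule cInf_lower[OF _ bdd])
      then show False using that by simp
    qed
    have "V 0 x > 0" for x using init[of x] \<delta> by (simp add: V_def add_nonneg_pos)
    then have t0pos: "t0 > 0" using x0 t0T by (metis atLeastAtMost_iff linorder_not_le order.order_iff_strict)
    have Vt0: "V t0 x \<ge> 0" for x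
    proof (rule ccontr)
      assume neg: "\<not> V t0 x \<ge> 0"
      from contV[of x] t0T neg obtain d where d: "d > 0"
        "\<And>s. s \<in> {0..T} \<Longrightarrow> dist s t0 < d \<Longrightarrow> dist (V s x) (V t0 x) < - V t0 x"
        unfolding continuous_on_iff by (metis neg_0_less_iff_less not_le)
      define s where "s = t0 - min (d/2) t0"
      have s: "s \<in> {0..T}" "s < t0" "dist s t0 < d" using t0pos t0T d(1) by (auto simp: s_def dist_real_def)
      have "V s x < 0" using d(2)[OF s(1) s(3)] by (auto simp: dist_real_def)
      with before[OF s(1) s(2), of x] show False by simp
    qed
    define E where "E = exp (C*t0)"
    have E: "E > 0" by (simp add: E_def)
    have "dW t0 x0 \<ge> (\<Sum>j\<in>UNIV. A t0 x0 j * W t0 (\<sigma> x0 j)) - e t0 x0 * W t0 x0"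
      using ge t0T by blast
    also have "(\<Sum>j\<in>UNIV. A t0 x0 j * W t0 (\<sigma> x0 j)) = (\<Sum>j\<in>UNIV. A t0 x0 j * V t0 (\<sigma> x0 j)) - \<delta> * E * (\<Sum>j\<in>UNIV. A t0 x0 j)"
      by (simp add: V_def E_def algebra_simps sum_subtractf sum_distrib_left sum_distrib_right sum.distrib)
    also have "e t0 x0 * W t0 x0 = e t0 x0 * V t0 x0 - e t0 x0 * \<delta> * E"
      by (simp add: V_def E_def algebra_simps)
    finally have dW: "dW t0 x0 \<ge> (\<Sum>j\<in>UNIV. A t0 x0 j * V t0 (\<sigma> x0 j)) - \<delta> * E * (\<Sum>j\<in>UNIV. A t0 x0 j)
        - (e t0 x0 * V t0 x0 - e t0 x0 * \<delta> * E)" .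
    have s1: "(\<Sum>j\<in>UNIV. A t0 x0 j * V t0 (\<sigma> x0 j)) \<ge> 0"
      using Apos t0T Vt0 by (intro sum_nonneg mult_nonneg_nonneg) auto
    have s2: "e t0 x0 * V t0 x0 \<le> 0" using epos[OF t0T] x0 by (simp add: mult_nonneg_nonpos)
    have s3: "e t0 x0 * \<delta> * E \<ge> 0" using epos[OF t0T] \<delta> E by simp
    have s4: "\<delta> * E * (\<Sum>j\<in>UNIV. A t0 x0 j) \<le> \<delta> * E * (C - 1)"
      using Abd[OF t0T, of x0] \<delta> E unfolding C_def by (intro mult_left_mono) auto
    have "dW t0 x0 + \<delta> * (C * E) > 0"
    proof -
      have "dW t0 x0 \<ge> - \<delta> * E * (C - 1)" using dW s1 s2 s3 s4 by linarith
      moreover have "\<delta> * (C * E) - \<delta> * E * (C - 1) = \<delta> * E" by (simp add: algebra_simps)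
      moreover have "\<delta> * E > 0" using \<delta> E by simp
      ultimately show ?thesis by linarith
    qed
    then obtain d where d: "d > 0" "\<And>h. h > 0 \<Longrightarrow> t0 - h \<in> {0..T} \<Longrightarrow> h < d \<Longrightarrow> V (t0 - h) x0 < V t0 x0"
      using has_real_derivative_pos_inc_left[OF derV[OF t0T, of x0]] unfolding E_def by blast
    define h where "h = min (d/2) t0"
    have h: "h > 0" "t0 - h \<in> {0..T}" "h < d" using d(1) t0pos t0T by (auto simp: h_def)
    have "V (t0 - h) x0 < 0" using d(2)[OF h] x0 by simp
    moreover have "V (t0 - h) x0 > 0" using before[OF h(2)] h(1) by simp
    ultimately show False by simp
  qed
  show ?thesis
  proof (intro ballI allI)
    fix t x assume t: "t \<in> {0..T}"
    show "W t x \<ge> 0"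
    proof (rule ccontr)
      assume "\<not> W t x \<ge> 0"
      define \<delta> where "\<delta> = - W t x / (2 * exp (C*t))"
      have "\<delta> > 0" using \<open>\<not> W t x \<ge> 0\<close> by (simp add: \<delta>_def divide_neg_pos)
      from main[OF this] t have "W t x + \<delta> * exp (C*t) > 0" by blast
      moreover have "\<delta> * exp (C*t) = - W t x / 2" by (simp add: \<delta>_def)
      ultimately show False using \<open>\<not> W t x \<ge> 0\<close> by simp
    qed
  qed
qed


lemma pin_sum:
  fixes h :: "('i::finite \<Rightarrow> 'a::finite) \<Rightarrow> real"
  shows "(\<Sum>z\<in>UNIV. (\<Prod>j\<in>UNIV - {i}. delta (z j) (x j)) * h z) = (\<Sum>w\<in>UNIV. h (x(i:=w)))"
proof -
  have pr: "(\<Prod>j\<in>UNIV - {i}. delta (z j) (x j)) = (if z \<in> range (\<lambda>w. x(i:=w)) then 1 else 0)" for z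
  proof (cases "z \<in> range (\<lambda>w. x(i:=w))")
    case True
    then obtain w where "z = x(i:=w)" by auto
    then show ?thesis using True by (simp add: delta_def)
  next
    case False
    have "\<exists>j. j \<noteq> i \<and> z j \<noteq> x j"
    proof (rule ccontr)
      assume "\<not> ?thesis"
      then have "z = x(i := z i)" by (auto simp: fun_eq_iff)
      then show False using False by (metis rangeI)
    qed
    then obtain j where "j \<noteq> i" "z j \<noteq> x j" by auto
    then have "delta (z j) (x j) = 0" by (simp add: delta_def)
    then have "(\<Prod>j\<in>UNIV - {i}. delta (z j) (x j)) = 0"
      using \<open>j \<noteq> i\<close> by (intro prod_zero) auto
    then show ?thesis using False by simp
  qed
  have "(\<Sum>z\<in>UNIV. (\<Prod>j\<in>UNIV - {i}. delta (z j) (x j)) * h z) = (\<Sum>z\<in>range (\<lambda>w. x(i:=w)). h z)"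
    unfolding pr by (simp add: sum.If_cases flip: of_bool_def)
  also have "\<dots> = (\<Sum>w\<in>UNIV. h (x(i:=w)))"
    by (subst sum.reindex) (auto simp: inj_on_def fun_eq_iff)
  finally show ?thesis .
qed

lemma finite_cont_bounds:
  fixes f :: "'k::finite \<Rightarrow> real \<Rightarrow> real"
  assumes cont: "\<And>k. continuous_on {a..b} (f k)"
  shows "\<exists>B. \<forall>k. \<forall>t\<in>{a..b}. \<bar>f k t\<bar> \<le> B"
proof -
  have "\<forall>k. \<exists>B. \<forall>t\<in>{a..b}. \<bar>f k t\<bar> \<le> B"
  proof
    fix k
    have "bounded (f k ` {a..b})" by (intro compact_imp_bounded compact_continuous_image cont) auto
    then show "\<exists>B. \<forall>t\<in>{a..b}. \<bar>f k t\<bar> \<le> B" by (auto simp: bounded_real)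
  qed
  then have "\<exists>B. \<forall>k. \<forall>t\<in>{a..b}. \<bar>f k t\<bar> \<le> B k" by (rule choice)
  then obtain B where B: "\<And>k t. t \<in> {a..b} \<Longrightarrow> \<bar>f k t\<bar> \<le> B k" by blast
  have "\<bar>f k t\<bar> \<le> (\<Sum>k\<in>UNIV. \<bar>B k\<bar>)" if "t \<in> {a..b}" for k t
  proof -
    have "\<bar>f k t\<bar> \<le> \<bar>B k\<bar>" using B[OF that, of k] by simp
    also have "\<dots> \<le> (\<Sum>k\<in>UNIV. \<bar>B k\<bar>)" by (rule member_le_sum) auto
    finally show ?thesis .
  qed
  then show ?thesis by blast
qed

lemma finite_cont_pos:
  fixes f :: "'k::finite \<Rightarrow> real \<Rightarrow> real"
  assumes cont: "\<And>k. continuous_on {a..b} (f k)" and pos: "\<And>k t. t \<in> {a..b} \<Longrightarrow> f k t > 0"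
    and ab: "a \<le> b"
  shows "\<exists>c>0. \<forall>k. \<forall>t\<in>{a..b}. f k t \<ge> c"
proof -
  have "\<forall>k. \<exists>s. s \<in> {a..b} \<and> (\<forall>t\<in>{a..b}. f k s \<le> f k t)"
    using continuous_attains_inf[OF compact_Icc _ cont] ab by fastforce
  then have "\<exists>s. \<forall>k. s k \<in> {a..b} \<and> (\<forall>t\<in>{a..b}. f k (s k) \<le> f k t)" by (rule choice)
  then obtain s where s: "\<And>k. s k \<in> {a..b}" "\<And>k t. t \<in> {a..b} \<Longrightarrow> f k (s k) \<le> f k t" by blast
  define c where "c = Min (range (\<lambda>k. f k (s k)))"
  have "c > 0" unfolding c_def using pos s(1) by (subst Min_gr_iff) auto
  moreover have "c \<le> f k t" if "t \<in> {a..b}" for k t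
  proof -
    have "c \<le> f k (s k)" unfolding c_def by (rule Min_le) auto
    also have "\<dots> \<le> f k t" using s(2)[OF that] .
    finally show ?thesis .
  qed
  ultimately show ?thesis by blast
qed

locale elbo_setting =
  fixes p :: "'a::finite \<Rightarrow> real"
    and kappa dkappa :: "real \<Rightarrow> 'a \<Rightarrow> real"
    and q :: "'i::finite \<Rightarrow> real \<Rightarrow> ('i \<Rightarrow> 'a) \<Rightarrow> 'a \<Rightarrow> real"
    and P :: "real \<Rightarrow> ('i \<Rightarrow> 'a) \<Rightarrow> real"
    and x1 :: "'i \<Rightarrow> 'a"
  assumes p_nonneg: "\<And>y. p y \<ge> 0"
    and p_sum: "(\<Sum>y\<in>UNIV. p y) = 1"
    and kappa0: "\<And>y. kappa 0 y = 0"
    and kappa_lim: "\<And>y. ((\<lambda>t. kappa t y) \<longlongrightarrow> 1) (at_left 1)"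
    and kappa_mono: "\<And>y. mono_on {0..<1} (\<lambda>t. kappa t y)"
    and kappa_lt1: "\<And>y t. t \<in> {0..<1} \<Longrightarrow> kappa t y < 1"
    and kappa_deriv: "\<And>y t. t \<in> {0..<1} \<Longrightarrow>
           ((\<lambda>s. kappa s y) has_real_derivative dkappa t y) (at t within {0..<1})"
    and dkappa_cont: "\<And>y. continuous_on {0..<1} (\<lambda>t. dkappa t y)"
    and q_pos: "\<And>i t z y. t \<in> {0..<1} \<Longrightarrow> q i t z y > 0"
    and q_sum: "\<And>i t z. t \<in> {0..<1} \<Longrightarrow> (\<Sum>y\<in>UNIV. q i t z y) = 1"
    and q_cont: "\<And>i z y. continuous_on {0..<1} (\<lambda>t. q i t z y)"
    and P_ctmc: "ctmc_marginal
                   (fact_vel (model_vel_i (sched_rate kappa dkappa) q))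
                   (\<lambda>x. \<Prod>i\<in>UNIV. p (x i)) P"
begin

definition lam where "lam t y = sched_rate kappa dkappa t y"
definition m where "m i t y = mix_path_i p kappa t y (x1 i)"
definition Q where "Q t x = mix_path p kappa t x x1"
definition R where "R i t x = (\<Prod>j\<in>UNIV - {i}. m j t (x j))"
definition dm where "dm i t y = dkappa t (x1 i) * (delta (x1 i) y - p y)"
definition dQ where "dQ t x = (\<Sum>i\<in>UNIV. dm i t (x i) * R i t x)"
definition rho where "rho i t z y = lam t y * q i t z y"
definition ex where "ex i t z = (\<Sum>y\<in>UNIV. rho i t z y)"
definition dP where "dP t x = (\<Sum>i\<in>UNIV. (\<Sum>w\<in>UNIV. rho i t (x(i:=w)) (x i) * P t (x(i:=w))) - ex i t x * P t x)"

lemma kappa_cont: "continuous_on {0..<1} (\<lambda>t. kappa t y)"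
  using kappa_deriv by (rule DERIV_continuous_on)

lemma kappa_nonneg: assumes t: "t \<in> {0..<1}" shows "kappa t y \<ge> 0"
proof -
  have "kappa 0 y \<le> kappa t y" using t by (auto intro: mono_onD[OF kappa_mono])
  then show ?thesis using kappa0[of y] by simp
qed

lemma dkappa_nonneg: assumes t: "t \<in> {0..<1}" shows "dkappa t y \<ge> 0"
proof (rule ccontr)
  assume "\<not> dkappa t y \<ge> 0"
  then have neg: "dkappa t y < 0" by simp
  obtain d where d: "d > 0" "\<And>h. h > 0 \<Longrightarrow> t + h \<in> {0..<1} \<Longrightarrow> h < d \<Longrightarrow> kappa t y > kappa (t+h) y"
    using has_real_derivative_neg_dec_right[OF kappa_deriv[OF t] neg] by blast
  define h where "h = min (d/2) ((1-t)/2)"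
  have h1: "h \<le> (1-t)/2" unfolding h_def by (rule min.cobounded2)
  have h2: "h \<le> d/2" unfolding h_def by (rule min.cobounded1)
  have h3: "h > 0" using t d(1) unfolding h_def by simp
  have h: "h > 0" "t + h \<in> {0..<1}" "h < d" using t d(1) h1 h2 h3 by auto
  have "kappa t y \<le> kappa (t+h) y" using t h by (auto intro: mono_onD[OF kappa_mono])
  with d(2)[OF h] show False by simp
qed

lemma dkappa_zero: assumes t: "t \<in> {0<..<1}" and k0: "kappa t y = 0" shows "dkappa t y = 0"
proof (rule ccontr)
  assume "dkappa t y \<noteq> 0"
  have t': "t \<in> {0..<1}" using t by auto
  have pos: "dkappa t y > 0" using dkappa_nonneg[OF t', of y] \<open>dkappa t y \<noteq> 0\<close> by simp
  obtain d where d: "d > 0" "\<And>h. h > 0 \<Longrightarrow> t - h \<in> {0..<1} \<Longrightarrow> h < d \<Longrightarrow> kappa (t - h) y < kappa t y"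
    using has_real_derivative_pos_inc_left[OF kappa_deriv[OF t'] pos] by blast
  define h where "h = min (d/2) t"
  have h1: "h \<le> t" unfolding h_def by (rule min.cobounded2)
  have h2: "h \<le> d/2" unfolding h_def by (rule min.cobounded1)
  have h3: "h > 0" using t d(1) unfolding h_def by simp
  have h: "h > 0" "t - h \<in> {0..<1}" "h < d" using t d(1) h1 h2 h3 by auto
  have "kappa (t-h) y \<ge> 0" using kappa_nonneg h by simp
  with d(2)[OF h] k0 show False by simp
qed

lemma lam_nonneg: "t \<in> {0..<1} \<Longrightarrow> lam t y \<ge> 0"
  using dkappa_nonneg[of t y] kappa_lt1[of t y] by (simp add: lam_def sched_rate_def)

lemma lam_ge_dkappa: "t \<in> {0..<1} \<Longrightarrow> lam t y \<ge> dkappa t y"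
proof -
  assume t: "t \<in> {0..<1}"
  have a: "0 < 1 - kappa t y" "1 - kappa t y \<le> 1" using kappa_lt1[OF t] kappa_nonneg[OF t] by auto
  have "dkappa t y * (1 - kappa t y) \<le> dkappa t y" using dkappa_nonneg[OF t] a by (simp add: mult_left_le)
  then show ?thesis using a by (simp add: lam_def sched_rate_def le_divide_eq)
qed

lemma lam_cont: "continuous_on {0..<1} (\<lambda>t. lam t y)"
proof -
  have "\<forall>t\<in>{0..<1}. 1 - kappa t y \<noteq> 0"
  proof
    fix t :: real assume "t \<in> {0..<1}"
    from kappa_lt1[OF this, of y] show "1 - kappa t y \<noteq> 0" by simp
  qed
  then show ?thesis unfolding lam_def sched_rate_def
    by (rule continuous_on_divide[OF dkappa_cont continuous_on_diff[OF continuous_on_const kappa_cont]])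
qed

lemma lam_times: "t \<in> {0..<1} \<Longrightarrow> lam t y * (1 - kappa t y) = dkappa t y"
  using kappa_lt1[of t y] by (simp add: lam_def sched_rate_def)

lemma rho_nonneg: "t \<in> {0..<1} \<Longrightarrow> rho i t z y \<ge> 0"
  using lam_nonneg q_pos[of t] by (simp add: rho_def less_imp_le)

lemma rho_cont: "continuous_on {0..<1} (\<lambda>t. rho i t z y)"
  unfolding rho_def by (rule continuous_on_mult[OF lam_cont q_cont])

lemma m_nonneg: "t \<in> {0..<1} \<Longrightarrow> m i t y \<ge> 0"
proof -
  assume t: "t \<in> {0..<1}"
  have a: "0 \<le> 1 - kappa t (x1 i)" "0 \<le> kappa t (x1 i)" using kappa_lt1[OF t] kappa_nonneg[OF t] by (auto simp: less_imp_le)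
  show ?thesis unfolding m_def mix_path_i_def
    by (intro add_nonneg_nonneg mult_nonneg_nonneg a p_nonneg) (simp add: delta_def)
qed

lemma m_sum: "(\<Sum>y\<in>UNIV. m i t y) = 1"
proof -
  have "(\<Sum>y\<in>UNIV. m i t y) = (1 - kappa t (x1 i)) * (\<Sum>y\<in>UNIV. p y) + kappa t (x1 i) * (\<Sum>y\<in>UNIV. delta (x1 i) y)"
    by (simp add: m_def mix_path_i_def sum.distrib sum_distrib_left)
  also have "(\<Sum>y\<in>UNIV. delta (x1 i) y) = 1" by (simp add: delta_def)
  finally show ?thesis by (simp add: p_sum)
qed

lemma Q_prod: "Q t x = (\<Prod>i\<in>UNIV. m i t (x i))"
  by (simp add: Q_def mix_path_def m_def)

lemma Q_split: "Q t x = m i t (x i) * R i t x"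
  unfolding Q_prod R_def by (subst prod.remove[of _ i]) auto

lemma Q_nonneg: "t \<in> {0..<1} \<Longrightarrow> Q t x \<ge> 0"
  unfolding Q_prod by (intro prod_nonneg m_nonneg) auto

lemma R_nonneg: "t \<in> {0..<1} \<Longrightarrow> R i t x \<ge> 0"
  unfolding R_def by (intro prod_nonneg m_nonneg) auto

lemma R_upd: "R i t (x(i:=w)) = R i t x"
  unfolding R_def by (intro prod.cong) auto

lemma Q_fiber: "(\<Sum>w\<in>UNIV. Q t (x(i:=w))) = R i t x"
  unfolding Q_split[of t _ i] R_upd by (simp add: sum_distrib_right[symmetric] m_sum)

lemma m_deriv: assumes t: "t \<in> {0..<1}"
  shows "((\<lambda>s. m i s y) has_real_derivative dm i t y) (at t within {0..<1})"
  unfolding m_def mix_path_i_def dm_def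
  by (auto intro!: derivative_eq_intros kappa_deriv[OF t] simp: algebra_simps)

lemma Q_deriv: assumes t: "t \<in> {0..<1}"
  shows "((\<lambda>s. Q s x) has_real_derivative dQ t x) (at t within {0..<1})"
proof -
  have "((\<lambda>s. \<Prod>i\<in>UNIV. m i s (x i)) has_derivative (\<lambda>h. \<Sum>i\<in>UNIV. (dm i t (x i) * h) * (\<Prod>j\<in>UNIV - {i}. m j t (x j)))) (at t within {0..<1})"
    using m_deriv[OF t] by (intro has_derivative_prod) (simp add: has_field_derivative_def)
  moreover have "(\<lambda>h. \<Sum>i\<in>UNIV. (dm i t (x i) * h) * (\<Prod>j\<in>UNIV - {i}. m j t (x j))) = (\<lambda>h. dQ t x * h)"
    by (auto simp: dQ_def R_def sum_distrib_left mult_ac)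
  ultimately show ?thesis unfolding has_field_derivative_def Q_prod by simp
qed

lemma dQ_gen: assumes t: "t \<in> {0..<1}"
  shows "dQ t x = (\<Sum>i\<in>UNIV. lam t (x1 i) * (delta (x1 i) (x i) * R i t x - Q t x))"
  unfolding dQ_def
proof (rule sum.cong[OF refl])
  fix i
  have "lam t (x1 i) * (delta (x1 i) (x i) * R i t x - Q t x)
      = lam t (x1 i) * (delta (x1 i) (x i) - m i t (x i)) * R i t x"
    by (simp add: Q_split[of t x i] algebra_simps)
  also have "delta (x1 i) (x i) - m i t (x i) = (1 - kappa t (x1 i)) * (delta (x1 i) (x i) - p (x i))"
    by (simp add: m_def mix_path_i_def delta_def algebra_simps)
  also have "lam t (x1 i) * ((1 - kappa t (x1 i)) * (delta (x1 i) (x i) - p (x i))) * R i t x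
      = (lam t (x1 i) * (1 - kappa t (x1 i))) * (delta (x1 i) (x i) - p (x i)) * R i t x"
    by (simp add: algebra_simps)
  also have "\<dots> = dm i t (x i) * R i t x"
    using lam_times[OF t] by (simp add: dm_def)
  finally show "dm i t (x i) * R i t x = lam t (x1 i) * (delta (x1 i) (x i) * R i t x - Q t x)" by simp
qed

lemma P0: "P 0 x = (\<Prod>i\<in>UNIV. p (x i))"
  using P_ctmc by (simp add: ctmc_marginal_def)

lemma P_lim: "((\<lambda>t. P t x) \<longlongrightarrow> P 1 x) (at_left 1)"
  using P_ctmc by (simp add: ctmc_marginal_def)

lemma dP_eq: "(\<Sum>z\<in>UNIV. fact_vel (model_vel_i (sched_rate kappa dkappa) q) t x z * P t z) = dP t x"
proof -
  have "(\<Sum>z\<in>UNIV. fact_vel (model_vel_i (sched_rate kappa dkappa) q) t x z * P t z)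
     = (\<Sum>i\<in>UNIV. \<Sum>z\<in>UNIV. (\<Prod>j\<in>UNIV - {i}. delta (z j) (x j)) *
          (model_vel_i lam q i t (x i) z * P t z))"
    unfolding fact_vel_def lam_def[abs_def] sum_distrib_right
    by (subst sum.swap) (simp add: algebra_simps)
  also have "\<dots> = (\<Sum>i\<in>UNIV. \<Sum>w\<in>UNIV. model_vel_i lam q i t (x i) (x(i:=w)) * P t (x(i:=w)))"
    by (subst pin_sum) simp
  also have "\<dots> = dP t x"
    unfolding dP_def
  proof (rule sum.cong[OF refl])
    fix i
    have "(\<Sum>w\<in>UNIV. model_vel_i lam q i t (x i) (x(i:=w)) * P t (x(i:=w)))
      = (\<Sum>w\<in>UNIV. rho i t (x(i:=w)) (x i) * P t (x(i:=w)))
        - (\<Sum>w\<in>UNIV. delta w (x i) * (ex i t (x(i:=w)) * P t (x(i:=w))))"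
      by (simp add: model_vel_i_def rho_def ex_def sum_subtractf algebra_simps)
    also have "(\<Sum>w\<in>UNIV. delta w (x i) * (ex i t (x(i:=w)) * P t (x(i:=w))))
        = (\<Sum>w\<in>UNIV. if w = x i then ex i t (x(i:=w)) * P t (x(i:=w)) else 0)"
      by (intro sum.cong) (auto simp: delta_def)
    also have "\<dots> = ex i t x * P t x" by simp
    finally show "(\<Sum>w\<in>UNIV. model_vel_i lam q i t (x i) (x(i:=w)) * P t (x(i:=w)))
      = (\<Sum>w\<in>UNIV. rho i t (x(i:=w)) (x i) * P t (x(i:=w))) - ex i t x * P t x" .
  qed
  finally show ?thesis .
qed

lemma P_deriv: "t \<in> {0..<1} \<Longrightarrow> ((\<lambda>s. P s x) has_real_derivative dP t x) (at t within {0..<1})"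
  using P_ctmc dP_eq by (simp add: ctmc_marginal_def)

end

context elbo_setting begin

definition g where "g c i t y = p y + delta (x1 i) y * c * kappa t (x1 i)"
definition G where "G c t x = (\<Prod>i\<in>UNIV. g c i t (x i))"
definition Gr where "Gr c i t x = (\<Prod>j\<in>UNIV - {i}. g c j t (x j))"
definition dG where "dG c t x = (\<Sum>i\<in>UNIV. (delta (x1 i) (x i) * c * dkappa t (x1 i)) * Gr c i t x)"

lemma g_nonneg: "t \<in> {0..<1} \<Longrightarrow> c \<ge> 0 \<Longrightarrow> g c i t y \<ge> 0"
  unfolding g_def using p_nonneg[of y] kappa_nonneg[of t "x1 i"]
  by (intro add_nonneg_nonneg mult_nonneg_nonneg) (auto simp: delta_def)

lemma G_split: "G c t x = g c i t (x i) * Gr c i t x"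
  unfolding G_def Gr_def by (subst prod.remove[of _ i]) auto

lemma Gr_upd: "Gr c i t (x(i:=w)) = Gr c i t x"
  unfolding Gr_def by (intro prod.cong) auto

lemma Gr_nonneg: "t \<in> {0..<1} \<Longrightarrow> c \<ge> 0 \<Longrightarrow> Gr c i t x \<ge> 0"
  unfolding Gr_def by (intro prod_nonneg g_nonneg) auto

lemma G_nonneg: "t \<in> {0..<1} \<Longrightarrow> c \<ge> 0 \<Longrightarrow> G c t x \<ge> 0"
  unfolding G_def by (intro prod_nonneg g_nonneg) auto

lemma g_deriv: assumes t: "t \<in> {0..<1}"
  shows "((\<lambda>s. g c i s y) has_real_derivative (delta (x1 i) y * c * dkappa t (x1 i))) (at t within {0..<1})"
  unfolding g_def
  by (auto intro!: derivative_eq_intros kappa_deriv[OF t] simp: algebra_simps)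

lemma G_deriv: assumes t: "t \<in> {0..<1}"
  shows "((\<lambda>s. G c s x) has_real_derivative dG c t x) (at t within {0..<1})"
proof -
  have "((\<lambda>s. \<Prod>i\<in>UNIV. g c i s (x i)) has_derivative (\<lambda>h. \<Sum>i\<in>UNIV. ((delta (x1 i) (x i) * c * dkappa t (x1 i)) * h) * (\<Prod>j\<in>UNIV - {i}. g c j t (x j)))) (at t within {0..<1})"
    using g_deriv[OF t] by (intro has_derivative_prod) (simp add: has_field_derivative_def)
  moreover have "(\<lambda>h. \<Sum>i\<in>UNIV. ((delta (x1 i) (x i) * c * dkappa t (x1 i)) * h) * (\<Prod>j\<in>UNIV - {i}. g c j t (x j))) = (\<lambda>h. dG c t x * h)"
    by (auto simp: dG_def Gr_def sum_distrib_left mult_ac)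
  ultimately show ?thesis unfolding has_field_derivative_def G_def by simp
qed

lemma g_sum_ge: "t \<in> {0..<1} \<Longrightarrow> c \<ge> 0 \<Longrightarrow> (\<Sum>w\<in>UNIV. g c i t w) \<ge> 1"
proof -
  assume t: "t \<in> {0..<1}" and c: "c \<ge> 0"
  have "(\<Sum>w\<in>UNIV. p w) \<le> (\<Sum>w\<in>UNIV. g c i t w)"
    unfolding g_def using kappa_nonneg[OF t, of "x1 i"] c
    by (intro sum_mono) (auto simp: delta_def)
  then show ?thesis using p_sum by simp
qed

lemma dG_le:
  assumes t: "t \<in> {0..<1}" and c: "c \<ge> 0"
    and cq: "\<And>i z y. c \<le> q i t z y"
  shows "dG c t x \<le> (\<Sum>i\<in>UNIV. \<Sum>w\<in>UNIV. rho i t (x(i:=w)) (x i) * G c t (x(i:=w)))"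
  unfolding dG_def
proof (rule sum_mono)
  fix i
  have nn: "\<And>w. rho i t (x(i:=w)) (x i) * G c t (x(i:=w)) \<ge> 0"
    using rho_nonneg[OF t] G_nonneg[OF t c] by simp
  show "delta (x1 i) (x i) * c * dkappa t (x1 i) * Gr c i t x \<le> (\<Sum>w\<in>UNIV. rho i t (x(i:=w)) (x i) * G c t (x(i:=w)))"
  proof (cases "x i = x1 i")
    case False
    then show ?thesis using nn by (simp add: delta_def sum_nonneg)
  next
    case True
    have Gr0: "Gr c i t x \<ge> 0" by (rule Gr_nonneg[OF t c])
    have lam0: "lam t (x1 i) \<ge> 0" by (rule lam_nonneg[OF t])
    have "delta (x1 i) (x i) * c * dkappa t (x1 i) * Gr c i t x = c * dkappa t (x1 i) * Gr c i t x"
      using True by (simp add: delta_def)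
    also have "\<dots> \<le> c * lam t (x1 i) * Gr c i t x"
      using lam_ge_dkappa[OF t, of "x1 i"] c Gr0 by (intro mult_right_mono mult_left_mono) auto
    also have "\<dots> \<le> lam t (x1 i) * Gr c i t x * (\<Sum>w\<in>UNIV. c * g c i t w)"
    proof -
      have "c \<le> c * (\<Sum>w\<in>UNIV. g c i t w)" using g_sum_ge[OF t c, of i] c by (simp add: mult_le_cancel_left1)
      then have "c \<le> (\<Sum>w\<in>UNIV. c * g c i t w)" by (simp add: sum_distrib_left)
      moreover have "lam t (x1 i) * Gr c i t x \<ge> 0" using lam0 Gr0 by simp
      ultimately have "(lam t (x1 i) * Gr c i t x) * c \<le> (lam t (x1 i) * Gr c i t x) * (\<Sum>w\<in>UNIV. c * g c i t w)"
        by (rule mult_left_mono)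
      then show ?thesis by (simp add: mult_ac)
    qed
    also have "\<dots> \<le> lam t (x1 i) * Gr c i t x * (\<Sum>w\<in>UNIV. q i t (x(i:=w)) (x1 i) * g c i t w)"
      using lam0 Gr0 cq g_nonneg[OF t c]
      by (intro mult_left_mono sum_mono mult_right_mono) auto
    also have "\<dots> = (\<Sum>w\<in>UNIV. rho i t (x(i:=w)) (x i) * G c t (x(i:=w)))"
      unfolding sum_distrib_left
      by (intro sum.cong refl) (simp add: True rho_def G_split[of c t _ i] Gr_upd)
    finally show ?thesis .
  qed
qed

lemma pair_sum: "(\<Sum>j\<in>UNIV. f j) = (\<Sum>i\<in>UNIV. \<Sum>w\<in>UNIV. (f (i,w)::real))"
  by (subst sum.cartesian_product) simp

lemma dP_pairs: "dP t x = (\<Sum>j\<in>UNIV. (case j of (i,w) \<Rightarrow> rho i t (x(i:=w)) (x i)) * P t (case j of (i,w) \<Rightarrow> x(i:=w)))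
     - (\<Sum>i\<in>UNIV. ex i t x) * P t x"
  unfolding dP_def sum_subtractf sum_distrib_right pair_sum by simp

lemma P_lower: assumes T: "0 \<le> T" "T < 1"
  shows "\<exists>c>0. \<forall>t\<in>{0..T}. \<forall>x. P t x \<ge> c * Q t x"
proof -
  have subs: "{0..T} \<subseteq> {0..<1}" using T by auto
  have "\<exists>B. \<forall>k. \<forall>t\<in>{0..T}. \<bar>(\<lambda>(k::'i \<times> ('i \<Rightarrow> 'a) \<times> 'a) t. case k of (i,z,y) \<Rightarrow> rho i t z y) k t\<bar> \<le> B"
  proof (rule finite_cont_bounds)
    fix k :: "'i \<times> ('i \<Rightarrow> 'a) \<times> 'a"
    obtain i z y where "k = (i,z,y)" by (cases k) auto
    then show "continuous_on {0..T} ((\<lambda>(k::'i \<times> ('i \<Rightarrow> 'a) \<times> 'a) t. case k of (i,z,y) \<Rightarrow> rho i t z y) k)"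
      using continuous_on_subset[OF rho_cont subs] by simp
  qed
  then obtain B where B: "\<forall>i z y. \<forall>t\<in>{0..T}. \<bar>rho i t z y\<bar> \<le> B" by auto
  have rhoB: "rho i t z y \<le> max B 0" if "t \<in> {0..T}" for i t z y
  proof -
    have "\<bar>rho i t z y\<bar> \<le> B" using B that by blast
    then show ?thesis by linarith
  qed
  have "\<exists>c0>0. \<forall>k. \<forall>t\<in>{0..T}. (\<lambda>(k::'i \<times> ('i \<Rightarrow> 'a) \<times> 'a) t. case k of (i,z,y) \<Rightarrow> q i t z y) k t \<ge> c0"
  proof (rule finite_cont_pos)
    fix k :: "'i \<times> ('i \<Rightarrow> 'a) \<times> 'a"
    obtain i z y where k: "k = (i,z,y)" by (cases k) auto
    then show "continuous_on {0..T} ((\<lambda>(k::'i \<times> ('i \<Rightarrow> 'a) \<times> 'a) t. case k of (i,z,y) \<Rightarrow> q i t z y) k)"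
      using continuous_on_subset[OF q_cont subs] by simp
    fix t assume "t \<in> {0..T}"
    then show "(\<lambda>(k::'i \<times> ('i \<Rightarrow> 'a) \<times> 'a) t. case k of (i,z,y) \<Rightarrow> q i t z y) k t > 0"
      using k q_pos subs by auto
  qed (use T in auto)
  then obtain c0 where c0: "c0 > 0" "\<And>k t. t \<in> {0..T} \<Longrightarrow> (case k of (i,z,y) \<Rightarrow> q i t z y) \<ge> c0" by auto
  define c where "c = min c0 1"
  have c: "c > 0" "c \<le> 1" using c0 by (auto simp: c_def)
  have cq: "c \<le> q i t z y" if "t \<in> {0..T}" for i t z y
    using c0(2)[OF that, of "(i,z,y)"] by (simp add: c_def)
  define K where "K = real CARD('i) * (real CARD('a) * max B 0)"
  have K0: "K \<ge> 0" by (simp add: K_def)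
  have exK: "(\<Sum>i\<in>UNIV. ex i t x) \<le> K" if t: "t \<in> {0..T}" for t x
  proof -
    have "(\<Sum>i\<in>UNIV. ex i t x) \<le> of_nat (card (UNIV::'i set)) * (real CARD('a) * max B 0)"
    proof (rule sum_bounded_above)
      fix i :: 'i
      show "ex i t x \<le> real CARD('a) * max B 0"
        unfolding ex_def using sum_bounded_above[of UNIV "\<lambda>y. rho i t x y" "max B 0"] rhoB[OF t] by simp
    qed
    then show ?thesis by (simp add: K_def)
  qed
  have pairK: "(\<Sum>j\<in>UNIV. (case j of (i,w) \<Rightarrow> rho i t (x(i:=w)) (x i))) \<le> K" if t: "t \<in> {0..T}" for t x
  proof -
    have "(\<Sum>j\<in>UNIV. (case j of (i,w) \<Rightarrow> rho i t (x(i:=w)) (x i))) = (\<Sum>i\<in>UNIV. \<Sum>w\<in>UNIV. rho i t (x(i:=w)) (x i))"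
      unfolding pair_sum by simp
    also have "\<dots> \<le> of_nat (card (UNIV::'i set)) * (real CARD('a) * max B 0)"
    proof (rule sum_bounded_above)
      fix i :: 'i
      show "(\<Sum>w\<in>UNIV. rho i t (x(i:=w)) (x i)) \<le> real CARD('a) * max B 0"
        using sum_bounded_above[of UNIV "\<lambda>w. rho i t (x(i:=w)) (x i)" "max B 0"] rhoB[OF t] by simp
    qed
    finally show ?thesis by (simp add: K_def)
  qed
  define W where "W t x = P t x - exp (- K * t) * G c t x" for t x
  define dW where "dW t x = dP t x - (exp (- K * t) * dG c t x - K * exp (- K * t) * G c t x)" for t x
  define A where "A t x j = (case j of (i,w) \<Rightarrow> rho i t (x(i:=w)) (x i))" for t x and j :: "'i \<times> 'a"
  define \<sigma> where "\<sigma> x j = (case j of (i,w) \<Rightarrow> x(i:=w))" for x and j :: "'i \<times> 'a"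
  define e where "e t x = (\<Sum>i\<in>UNIV. ex i t x)" for t x
  have Wge: "\<forall>t\<in>{0..T}. \<forall>x. W t x \<ge> 0"
  proof (rule comparison[where dW=dW and A=A and \<sigma>=\<sigma> and e=e and K=K])
    show "0 \<le> T" by fact
  next
    fix x t assume t: "t \<in> {0..T}"
    then have t1: "t \<in> {0..<1}" using subs by auto
    have "((\<lambda>s. P s x - exp (- K * s) * G c s x) has_real_derivative
            dP t x - (exp (- K * t) * dG c t x - K * exp (- K * t) * G c t x)) (at t within {0..<1})"
      by (auto intro!: derivative_eq_intros P_deriv[OF t1] G_deriv[OF t1] simp: algebra_simps)
    then show "((\<lambda>s. W s x) has_real_derivative dW t x) (at t within {0..T})"
      unfolding W_def dW_def by (rule DERIV_subset[OF _ subs])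
  next
    fix x t assume t: "t \<in> {0..T}"
    then have t1: "t \<in> {0..<1}" using subs by auto
    define E where "E = exp (- K * t)"
    have E: "E > 0" by (simp add: E_def)
    have G0: "G c t x \<ge> 0" using G_nonneg[OF t1] c by simp
    have e0: "e t x \<ge> 0" unfolding e_def ex_def using rho_nonneg[OF t1] by (intro sum_nonneg) auto
    have "dG c t x \<le> (\<Sum>j\<in>UNIV. A t x j * G c t (\<sigma> x j))"
    proof -
      have "dG c t x \<le> (\<Sum>i\<in>UNIV. \<Sum>w\<in>UNIV. rho i t (x(i:=w)) (x i) * G c t (x(i:=w)))"
        using dG_le[OF t1, of c x] c cq[OF t] by simp
      also have "\<dots> = (\<Sum>j\<in>UNIV. A t x j * G c t (\<sigma> x j))"
        unfolding A_def \<sigma>_def pair_sum by simp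
      finally show ?thesis .
    qed
    then have 1: "E * dG c t x \<le> (\<Sum>j\<in>UNIV. A t x j * (E * G c t (\<sigma> x j)))"
    proof -
      have "E * dG c t x \<le> E * (\<Sum>j\<in>UNIV. A t x j * G c t (\<sigma> x j))"
        using \<open>dG c t x \<le> _\<close> E by (simp add: mult_left_mono)
      also have "\<dots> = (\<Sum>j\<in>UNIV. A t x j * (E * G c t (\<sigma> x j)))"
        by (simp add: sum_distrib_left mult_ac)
      finally show ?thesis .
    qed
    have 2: "- K * E * G c t x \<le> - e t x * (E * G c t x)"
      using exK[OF t, of x] E G0 unfolding e_def by (simp add: mult_right_mono)
    have dP': "dP t x = (\<Sum>j\<in>UNIV. A t x j * P t (\<sigma> x j)) - e t x * P t x"
      unfolding dP_pairs A_def \<sigma>_def e_def by simp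
    have Wsig: "W t (\<sigma> x j) = P t (\<sigma> x j) - E * G c t (\<sigma> x j)" for j by (simp add: W_def E_def)
    have "(\<Sum>j\<in>UNIV. A t x j * W t (\<sigma> x j)) - e t x * W t x
        = dP t x - ((\<Sum>j\<in>UNIV. A t x j * (E * G c t (\<sigma> x j))) - e t x * (E * G c t x))"
      unfolding dP' Wsig by (simp add: W_def E_def algebra_simps sum_subtractf)
    also have "\<dots> \<le> dW t x"
      unfolding dW_def E_def[symmetric] using 1 2 by (simp add: algebra_simps)
    finally show "dW t x \<ge> (\<Sum>j\<in>UNIV. A t x j * W t (\<sigma> x j)) - e t x * W t x" .
  next
    fix x j t assume t: "t \<in> {0..T}"
    then have t1: "t \<in> {0..<1}" using subs by auto
    show "A t x j \<ge> 0" unfolding A_def using rho_nonneg[OF t1] by (simp split: prod.splits)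
  next
    fix x t assume t: "t \<in> {0..T}"
    show "(\<Sum>j\<in>UNIV. A t x j) \<le> K" unfolding A_def using pairK[OF t] by simp
  next
    fix x t assume t: "t \<in> {0..T}"
    then have t1: "t \<in> {0..<1}" using subs by auto
    show "e t x \<ge> 0" unfolding e_def ex_def using rho_nonneg[OF t1] by (intro sum_nonneg) auto
  next
    fix x
    show "W 0 x \<ge> 0" by (simp add: W_def P0 G_def g_def kappa0)
  qed
  define c' where "c' = exp (- K * T) * c ^ CARD('i)"
  have "c' > 0" using c by (simp add: c'_def)
  moreover have "P t x \<ge> c' * Q t x" if t: "t \<in> {0..T}" for t x
  proof -
    have t1: "t \<in> {0..<1}" using t subs by auto
    have "c ^ CARD('i) * Q t x = (\<Prod>i\<in>UNIV. c * m i t (x i))"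
      by (simp add: Q_prod prod.distrib)
    also have "\<dots> \<le> G c t x" unfolding G_def
    proof (rule prod_mono)
      fix i :: 'i
      have k: "0 \<le> kappa t (x1 i)" "kappa t (x1 i) < 1" using kappa_nonneg[OF t1] kappa_lt1[OF t1] by auto
      have "c * (1 - kappa t (x1 i)) \<le> 1" using c k by (simp add: mult_le_one)
      then have "c * (1 - kappa t (x1 i)) * p (x i) \<le> p (x i)" using p_nonneg[of "x i"] mult_right_mono[of "c * (1 - kappa t (x1 i))" 1 "p (x i)"] by simp
      moreover have "g c i t (x i) - c * m i t (x i) = p (x i) - c * (1 - kappa t (x1 i)) * p (x i)"
        by (simp add: g_def m_def mix_path_i_def algebra_simps)
      moreover have "0 \<le> c * m i t (x i)" using m_nonneg[OF t1, of i "x i"] c by simp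
      ultimately show "0 \<le> c * m i t (x i) \<and> c * m i t (x i) \<le> g c i t (x i)" by linarith
    qed
    finally have 1: "c ^ CARD('i) * Q t x \<le> G c t x" .
    have 2: "exp (- K * T) \<le> exp (- K * t)" using t K0 by (simp add: mult_left_mono)
    have "c' * Q t x = exp (- K * T) * (c ^ CARD('i) * Q t x)" by (simp add: c'_def)
    also have "\<dots> \<le> exp (- K * t) * G c t x"
      using 1 2 Q_nonneg[OF t1] c G_nonneg[OF t1] by (intro mult_mono) auto
    also have "\<dots> \<le> P t x" using Wge t unfolding W_def by auto
    finally show ?thesis .
  qed
  ultimately show ?thesis by blast
qed

end


lemma xlnx_tendsto: "((\<lambda>u::real. u * ln u) \<longlongrightarrow> 0) (at_right 0)"
proof -
  have "((\<lambda>u. ln (inverse u) / inverse u) \<longlongrightarrow> (0::real)) (at_right 0)"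
    by (rule filterlim_compose[OF ln_x_over_x_tendsto_0 filterlim_inverse_at_top_right])
  then have "((\<lambda>u. - (ln (inverse u) / inverse u)) \<longlongrightarrow> (0::real)) (at_right 0)"
    using tendsto_minus by fastforce
  moreover have "\<forall>\<^sub>F u in at_right 0. - (ln (inverse u) / inverse u) = u * ln (u::real)"
    using eventually_at_right_less[of "0::real"] by eventually_elim (simp add: ln_inverse divide_inverse mult.commute)
  ultimately show ?thesis by (rule Lim_transform_eventually)
qed

lemma xlnx_cont: "continuous_on {0..} (\<lambda>u::real. u * ln u)"
proof (rule continuous_on_eq_continuous_within[THEN iffD2], rule ballI)
  fix u :: real assume u: "u \<in> {0..}"
  show "continuous (at u within {0..}) (\<lambda>u::real. u * ln u)"
  proof (cases "u = 0")
    case True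
    then show ?thesis using xlnx_tendsto by (simp add: continuous_within at_within_Ici_at_right)
  next
    case False
    then have "u > 0" using u by simp
    have "isCont ln u" by (rule DERIV_isCont[OF DERIV_ln[OF \<open>u > 0\<close>]])
    then show ?thesis by (rule continuous_at_imp_continuous_within[OF continuous_mult[OF continuous_ident]])
  qed
qed

context elbo_setting begin

definition Fx where "Fx t x = Q t x * ln (P t x / Q t x)"
definition dF where "dF t x = dQ t x * (ln (P t x / Q t x) - 1) + Q t x * dP t x / P t x"
definition tau where "tau y = Inf {t\<in>{0..<1}. kappa t y > 0}"
definition Sx where "Sx = range tau"

lemma Sx_finite: "finite Sx" unfolding Sx_def by simp

lemma P_pos: assumes t: "t \<in> {0..<1}" and Q: "Q t x > 0" shows "P t x > 0"
proof -
  obtain c where c: "c > 0" "\<forall>s\<in>{0..t}. \<forall>x. P s x \<ge> c * Q s x" using P_lower[of t] t by auto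
  have "P t x \<ge> c * Q t x" using c(2) t by auto
  moreover have "c * Q t x > 0" using c(1) Q by simp
  ultimately show ?thesis by simp
qed

lemma P_nonneg: assumes t: "t \<in> {0..<1}" shows "P t x \<ge> 0"
proof -
  obtain c where c: "c > 0" "\<forall>s\<in>{0..t}. \<forall>x. P s x \<ge> c * Q s x" using P_lower[of t] t by auto
  have "P t x \<ge> c * Q t x" using c(2) t by auto
  moreover have "c * Q t x \<ge> 0" using c(1) Q_nonneg[OF t] by simp
  ultimately show ?thesis by simp
qed

lemma Q_local_zero:
  assumes t: "t \<in> {0<..<1}" "t \<notin> Sx" and Q0: "Q t x = 0"
  shows "\<exists>\<epsilon>>0. \<forall>s. dist s t < \<epsilon> \<longrightarrow> Q s x = 0"
proof -
  have t1: "t \<in> {0..<1}" using t by auto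
  obtain i where mi: "m i t (x i) = 0" using Q0 unfolding Q_prod by (auto simp: prod_zero_iff)
  define k where "k = x1 i"
  have k1: "0 < 1 - kappa t k" using kappa_lt1[OF t1] by simp
  have k0: "kappa t k \<ge> 0" using kappa_nonneg[OF t1] by simp
  have pd: "(1 - kappa t k) * p (x i) \<ge> 0" "kappa t k * delta k (x i) \<ge> 0"
    using k1 k0 p_nonneg[of "x i"] by (auto simp: delta_def)
  have sum0: "(1 - kappa t k) * p (x i) + kappa t k * delta k (x i) = 0"
    using mi by (simp add: m_def mix_path_i_def k_def)
  then have p0: "p (x i) = 0" using pd k1 by (simp add: add_nonneg_eq_0_iff)
  have kd0: "kappa t k * delta k (x i) = 0" using sum0 pd by (simp add: add_nonneg_eq_0_iff)
  have Qs: "Q s x = 0" if "kappa s k * delta k (x i) = 0" for s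
  proof -
    have "m i s (x i) = 0" using that p0 by (simp add: m_def mix_path_i_def k_def)
    then show ?thesis by (simp add: Q_split[of s x i])
  qed
  show ?thesis
  proof (cases "x i = k")
    case False
    then show ?thesis using Qs by (intro exI[of _ 1]) (auto simp: delta_def)
  next
    case True
    then have kt0: "kappa t k = 0" using kd0 by (simp add: delta_def)
    define B where "B = {s\<in>{0..<1}. kappa s k > 0}"
    show ?thesis
    proof (cases "B = {}")
      case True
      have "Q s x = 0" if "dist s t < min t (1 - t)" for s
      proof -
        have s1: "s \<in> {0..<1}" using that t by (auto simp: dist_real_def)
        then have "kappa s k \<le> 0" using True by (auto simp: B_def)
        then have "kappa s k = 0" using kappa_nonneg[OF s1, of k] by simp
        then show ?thesis by (intro Qs) simp
      qed
      moreover have "min t (1 - t) > 0" using t by auto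
      ultimately show ?thesis by blast
    next
      case False
      have bdd: "bdd_below B" unfolding B_def by (rule bdd_belowI[of _ 0]) auto
      have tauk: "tau k = Inf B" by (simp add: tau_def B_def)
      have "tau k \<in> Sx" unfolding Sx_def by simp
      then have "t \<noteq> Inf B" using t(2) tauk by auto
      moreover have "\<not> Inf B < t"
      proof
        assume "Inf B < t"
        then obtain s where s: "s \<in> B" "s < t" using cInf_less_iff[OF False bdd] by auto
        then have "kappa s k \<le> kappa t k" using t1 by (intro mono_onD[OF kappa_mono]) (auto simp: B_def)
        then show False using s kt0 by (simp add: B_def)
      qed
      ultimately have tlt: "t < Inf B" by simp
      obtain b where b: "b \<in> B" using False by auto
      have Ib: "Inf B \<le> b" using b bdd by (rule cInf_lower)
      have b1: "b < 1" using b by (simp add: B_def)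
      have "Q s x = 0" if "dist s t < min t (Inf B - t)" for s
      proof -
        have s: "0 \<le> s" "s < Inf B" using that t by (auto simp: dist_real_def)
        then have s1: "s \<in> {0..<1}" using Ib b1 by auto
        have "s \<notin> B"
        proof
          assume "s \<in> B" then have "Inf B \<le> s" using bdd by (rule cInf_lower)
          then show False using s by simp
        qed
        then have "kappa s k \<le> 0" using s1 by (auto simp: B_def)
        then have "kappa s k = 0" using kappa_nonneg[OF s1, of k] by simp
        then show ?thesis by (intro Qs) simp
      qed
      moreover have "min t (Inf B - t) > 0" using t tlt by auto
      ultimately show ?thesis by blast
    qed
  qed
qed

lemma interior_at: "(t::real) \<in> {0<..<1} \<Longrightarrow> at t within {0..<1} = at t"
proof -
  assume t: "t \<in> {0<..<1}"
  have "interior {0..<1::real} = {0<..<1}" by (rule interior_atLeastLessThan)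
  then have "t \<in> interior {0..<1}" using t by simp
  then show ?thesis by (rule at_within_interior)
qed

lemma Fx_deriv:
  assumes t: "t \<in> {0<..<1}" "t \<notin> Sx"
  shows "((\<lambda>s. Fx s x) has_real_derivative dF t x) (at t)"
proof -
  have t1: "t \<in> {0..<1}" using t by auto
  have dQ: "((\<lambda>s. Q s x) has_real_derivative dQ t x) (at t)"
    using Q_deriv[OF t1] interior_at[OF t(1)] by simp
  have dP: "((\<lambda>s. P s x) has_real_derivative dP t x) (at t)"
    using P_deriv[OF t1] interior_at[OF t(1)] by simp
  show ?thesis
  proof (cases "Q t x = 0")
    case False
    then have Qp: "Q t x > 0" using Q_nonneg[OF t1, of x] by simp
    have Pp: "P t x > 0" using P_pos[OF t1 Qp] .
    have "((\<lambda>s. Q s x * ln (P s x / Q s x)) has_real_derivative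
        dQ t x * ln (P t x / Q t x) + Q t x * ((dP t x * Q t x - P t x * dQ t x) / (Q t x * Q t x) / (P t x / Q t x))) (at t)"
      using Qp Pp by (auto intro!: derivative_eq_intros dQ dP)
    moreover have "dQ t x * ln (P t x / Q t x) + Q t x * ((dP t x * Q t x - P t x * dQ t x) / (Q t x * Q t x) / (P t x / Q t x))
        = dF t x"
      using Qp Pp unfolding dF_def by (simp add: field_simps)
    ultimately show ?thesis unfolding Fx_def by simp
  next
    case True
    obtain \<epsilon> where \<epsilon>: "\<epsilon> > 0" "\<And>s. dist s t < \<epsilon> \<Longrightarrow> Q s x = 0"
      using Q_local_zero[OF t True] by blast
    have z: "((\<lambda>s. Q s x) has_real_derivative 0) (at t)"
      by (rule has_field_derivative_transform_within_open[OF DERIV_const[of 0 "at t"], of "ball t \<epsilon>"])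
         (use \<epsilon> in \<open>auto simp: dist_commute\<close>)
    have "dQ t x = 0" using DERIV_unique[OF dQ z] .
    then have dF0: "dF t x = 0" using True by (simp add: dF_def)
    have "((\<lambda>s. Fx s x) has_real_derivative 0) (at t)"
      by (rule has_field_derivative_transform_within_open[OF DERIV_const[of 0 "at t"], of "ball t \<epsilon>"])
         (use \<epsilon> in \<open>auto simp: dist_commute Fx_def\<close>)
    then show ?thesis using dF0 by simp
  qed
qed

lemma P_cont: "continuous_on {0..<1} (\<lambda>s. P s x)"
  using P_deriv by (rule DERIV_continuous_on)

lemma Q_cont: "continuous_on {0..<1} (\<lambda>s. Q s x)"
  using Q_deriv by (rule DERIV_continuous_on)

lemma Fx_cont:
  assumes T: "0 \<le> T" "T < 1" and t: "t \<in> {0..T}"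
  shows "continuous (at t within {0..T}) (\<lambda>s. Fx s x)"
proof -
  have subs: "{0..T} \<subseteq> {0..<1}" using T by auto
  have t1: "t \<in> {0..<1}" using t subs by auto
  have cP: "((\<lambda>s. P s x) \<longlongrightarrow> P t x) (at t within {0..T})"
    using continuous_on_subset[OF P_cont subs] t by (simp add: continuous_on_def)
  have cQ: "((\<lambda>s. Q s x) \<longlongrightarrow> Q t x) (at t within {0..T})"
    using continuous_on_subset[OF Q_cont subs] t by (simp add: continuous_on_def)
  show ?thesis
  proof (cases "Q t x = 0")
    case False
    then have Qp: "Q t x > 0" using Q_nonneg[OF t1, of x] by simp
    have Pp: "P t x > 0" using P_pos[OF t1 Qp] .
    have "((\<lambda>s. Q s x * ln (P s x / Q s x)) \<longlongrightarrow> Q t x * ln (P t x / Q t x)) (at t within {0..T})"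
      using Qp Pp by (intro tendsto_intros cP cQ) auto
    then show ?thesis by (simp add: continuous_within Fx_def)
  next
    case True
    obtain c where c: "c > 0" "\<forall>s\<in>{0..T}. \<forall>x. P s x \<ge> c * Q s x" using P_lower[OF T] by auto
    have "\<exists>B. \<forall>k. \<forall>s\<in>{0..T}. \<bar>(\<lambda>k s. P s k) k s\<bar> \<le> B"
      by (rule finite_cont_bounds) (use continuous_on_subset[OF P_cont subs] in auto)
    then obtain B0 where B0: "\<forall>k. \<forall>s\<in>{0..T}. \<bar>P s k\<bar> \<le> B0" by auto
    define B where "B = max B0 1"
    have Bp: "B > 0" by (simp add: B_def)
    have PB: "P s x \<le> B" if "s \<in> {0..T}" for s
    proof -
      have "\<bar>P s x\<bar> \<le> B0" using B0 that by blast
      then show ?thesis unfolding B_def by linarith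
    qed
    have low: "Q s x * ln c \<le> Fx s x" and up: "Fx s x \<le> Q s x * ln B - Q s x * ln (Q s x)"
      if s: "s \<in> {0..T}" for s
    proof -
      have s1: "s \<in> {0..<1}" using s subs by auto
      have "Q s x * ln c \<le> Fx s x \<and> Fx s x \<le> Q s x * ln B - Q s x * ln (Q s x)"
      proof (cases "Q s x = 0")
        case True then show ?thesis by (simp add: Fx_def)
      next
        case False
        then have Qp: "Q s x > 0" using Q_nonneg[OF s1, of x] by simp
        have Pp: "P s x > 0" using P_pos[OF s1 Qp] .
        have "c * Q s x \<le> P s x" using c(2) s by auto
        then have r1: "c \<le> P s x / Q s x" using Qp by (simp add: le_divide_eq)
        have r2: "P s x / Q s x \<le> B / Q s x" using PB[OF s] Qp by (simp add: divide_right_mono)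
        have l1: "ln c \<le> ln (P s x / Q s x)" using r1 c(1) by simp
        have "ln (P s x / Q s x) \<le> ln (B / Q s x)"
          using r2 Pp Qp Bp by simp
        moreover have "ln (B / Q s x) = ln B - ln (Q s x)" using Bp Qp by (simp add: ln_div)
        ultimately have l2: "ln (P s x / Q s x) \<le> ln B - ln (Q s x)" by simp
        show ?thesis unfolding Fx_def using l1 l2 Qp
          by (auto simp: right_diff_distrib[symmetric] intro: mult_left_mono)
      qed
      then show "Q s x * ln c \<le> Fx s x" "Fx s x \<le> Q s x * ln B - Q s x * ln (Q s x)" by auto
    qed
    have ev: "eventually (\<lambda>s. s \<in> {0..T}) (at t within {0..T})" by (simp add: eventually_at_filter)
    have lim1: "((\<lambda>s. Q s x * ln c) \<longlongrightarrow> 0) (at t within {0..T})"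
      using tendsto_mult[OF cQ tendsto_const[of "ln c"]] True by simp
    have xl: "((\<lambda>s. Q s x * ln (Q s x)) \<longlongrightarrow> 0) (at t within {0..T})"
    proof -
      have "((\<lambda>s. (\<lambda>u::real. u * ln u) (Q s x)) \<longlongrightarrow> (\<lambda>u::real. u * ln u) (Q t x)) (at t within {0..T})"
      proof (rule continuous_on_tendsto_compose[OF xlnx_cont cQ])
        show "Q t x \<in> {0..}" using True by simp
        show "\<forall>\<^sub>F s in at t within {0..T}. Q s x \<in> {0..}"
          using ev by eventually_elim (use subs Q_nonneg in auto)
      qed
      then show ?thesis using True by simp
    qed
    have lim2: "((\<lambda>s. Q s x * ln B - Q s x * ln (Q s x)) \<longlongrightarrow> 0) (at t within {0..T})"
      using tendsto_diff[OF tendsto_mult[OF cQ tendsto_const[of "ln B"]] xl] True by simp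
    have "((\<lambda>s. Fx s x) \<longlongrightarrow> 0) (at t within {0..T})"
    proof (rule tendsto_sandwich[OF _ _ lim1 lim2])
      show "\<forall>\<^sub>F s in at t within {0..T}. Q s x * ln c \<le> Fx s x" using ev by eventually_elim (rule low)
      show "\<forall>\<^sub>F s in at t within {0..T}. Fx s x \<le> Q s x * ln B - Q s x * ln (Q s x)" using ev by eventually_elim (rule up)
    qed
    then show ?thesis using True by (simp add: continuous_within Fx_def)
  qed
qed

end

context elbo_setting begin

lemma reindex_R:
  "(\<Sum>x\<in>UNIV. delta (x1 i) (x i) * R i t x * f x) = (\<Sum>z\<in>UNIV. Q t z * f (z(i:=x1 i)))"
proof -
  have "(\<Sum>z\<in>UNIV. Q t z * f (z(i:=x1 i)))
      = (\<Sum>x\<in>{x. x i = x1 i}. \<Sum>w\<in>UNIV. Q t (x(i:=w)) * f (x(i:=w,i:=x1 i)))"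
    by (rule fiber_sum)
  also have "\<dots> = (\<Sum>x\<in>{x. x i = x1 i}. R i t x * f x)"
  proof (rule sum.cong[OF refl])
    fix x assume "x \<in> {x. x i = x1 i}"
    then have "x(i := x1 i) = x" by auto
    then have "(\<Sum>w\<in>UNIV. Q t (x(i:=w)) * f (x(i:=w,i:=x1 i))) = (\<Sum>w\<in>UNIV. Q t (x(i:=w))) * f x"
      by (simp add: sum_distrib_right)
    then show "(\<Sum>w\<in>UNIV. Q t (x(i:=w)) * f (x(i:=w,i:=x1 i))) = R i t x * f x"
      by (simp add: Q_fiber)
  qed
  also have "\<dots> = (\<Sum>x\<in>UNIV. if x i = x1 i then R i t x * f x else 0)"
    by (rule sum.inter_filter[where A=UNIV, simplified]) simp
  also have "\<dots> = (\<Sum>x\<in>UNIV. delta (x1 i) (x i) * R i t x * f x)"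
    by (intro sum.cong) (auto simp: delta_def)
  finally show ?thesis by simp
qed

lemma sum_dQ: assumes t: "t \<in> {0..<1}"
  shows "(\<Sum>x\<in>UNIV. dQ t x * h x) = (\<Sum>i\<in>UNIV. lam t (x1 i) * (\<Sum>z\<in>UNIV. Q t z * (h (z(i:=x1 i)) - h z)))"
proof -
  have "(\<Sum>x\<in>UNIV. dQ t x * h x) = (\<Sum>x\<in>UNIV. \<Sum>i\<in>UNIV. lam t (x1 i) * (delta (x1 i) (x i) * R i t x * h x - Q t x * h x))"
    unfolding dQ_gen[OF t] sum_distrib_right by (simp add: algebra_simps)
  also have "\<dots> = (\<Sum>i\<in>UNIV. lam t (x1 i) * ((\<Sum>x\<in>UNIV. delta (x1 i) (x i) * R i t x * h x) - (\<Sum>x\<in>UNIV. Q t x * h x)))"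
    by (subst sum.swap) (intro sum.cong refl, simp add: sum_distrib_left[symmetric] sum_subtractf)
  also have "\<dots> = (\<Sum>i\<in>UNIV. lam t (x1 i) * (\<Sum>z\<in>UNIV. Q t z * (h (z(i:=x1 i)) - h z)))"
    unfolding reindex_R by (simp add: sum_subtractf algebra_simps)
  finally show ?thesis .
qed

definition TT where "TT i t z y = rho i t z y * P t z * (Q t (z(i:=y)) / P t (z(i:=y)))"

lemma sum_QdP: assumes t: "t \<in> {0..<1}"
  shows "(\<Sum>x\<in>UNIV. Q t x * dP t x / P t x) = (\<Sum>i\<in>UNIV. \<Sum>z\<in>UNIV. (\<Sum>y\<in>UNIV. TT i t z y) - Q t z * ex i t z)"
proof -
  have "(\<Sum>x\<in>UNIV. Q t x * dP t x / P t x)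
      = (\<Sum>x\<in>UNIV. \<Sum>i\<in>UNIV. (Q t x / P t x) * (\<Sum>w\<in>UNIV. rho i t (x(i:=w)) (x i) * P t (x(i:=w))) - Q t x * ex i t x)"
  proof (rule sum.cong[OF refl])
    fix x
    show "Q t x * dP t x / P t x = (\<Sum>i\<in>UNIV. (Q t x / P t x) * (\<Sum>w\<in>UNIV. rho i t (x(i:=w)) (x i) * P t (x(i:=w))) - Q t x * ex i t x)"
    proof (cases "P t x = 0")
      case True
      then have "Q t x = 0" using P_pos[OF t, of x] Q_nonneg[OF t, of x] by fastforce
      then show ?thesis using True by simp
    next
      case False
      have "Q t x * dP t x / P t x = (Q t x / P t x) * dP t x" by simp
      also have "\<dots> = (\<Sum>i\<in>UNIV. (Q t x / P t x) * (\<Sum>w\<in>UNIV. rho i t (x(i:=w)) (x i) * P t (x(i:=w))) - (Q t x / P t x) * (ex i t x * P t x))"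
        unfolding dP_def by (simp add: sum_distrib_left right_diff_distrib)
      also have "\<dots> = (\<Sum>i\<in>UNIV. (Q t x / P t x) * (\<Sum>w\<in>UNIV. rho i t (x(i:=w)) (x i) * P t (x(i:=w))) - Q t x * ex i t x)"
        using False by (intro sum.cong refl) simp
      finally show ?thesis .
    qed
  qed
  also have "\<dots> = (\<Sum>i\<in>UNIV. (\<Sum>x\<in>UNIV. \<Sum>w\<in>UNIV. TT i t (x(i:=w)) (x i)) - (\<Sum>z\<in>UNIV. Q t z * ex i t z))"
    by (subst sum.swap) (simp add: sum_subtractf sum_distrib_left TT_def mult_ac)
  also have "\<dots> = (\<Sum>i\<in>UNIV. \<Sum>z\<in>UNIV. (\<Sum>y\<in>UNIV. TT i t z y) - Q t z * ex i t z)"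
    by (simp add: swap_sum sum_subtractf)
  finally show ?thesis .
qed

end

context elbo_setting begin

lemma TT_nonneg: "t \<in> {0..<1} \<Longrightarrow> TT i t z y \<ge> 0"
  unfolding TT_def using rho_nonneg[of t i z y] P_nonneg[of t] Q_nonneg[of t]
  by (intro mult_nonneg_nonneg divide_nonneg_nonneg) auto

lemma TT_self: assumes t: "t \<in> {0..<1}" shows "TT i t z (z i) = rho i t z (z i) * Q t z"
proof (cases "P t z = 0")
  case True
  then have "Q t z = 0" using P_pos[OF t, of z] Q_nonneg[OF t, of z] by fastforce
  then show ?thesis using True by (simp add: TT_def)
next
  case False then show ?thesis by (simp add: TT_def)
qed

lemma key_ineq:
  assumes t: "t \<in> {0<..<1}" and ne: "z i \<noteq> x1 i"
  shows "lam t (x1 i) * (Q t z * (ln (P t (z(i:=x1 i)) / Q t (z(i:=x1 i))) - ln (P t z / Q t z))) + TT i t z (x1 i)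
    \<ge> Q t z * (lam t (x1 i) * (1 + ln (q i t z (x1 i))))"
proof -
  have t1: "t \<in> {0..<1}" using t by auto
  define z' where "z' = z(i:=x1 i)"
  define l where "l = lam t (x1 i)"
  define qq where "qq = q i t z (x1 i)"
  have l0: "l \<ge> 0" unfolding l_def by (rule lam_nonneg[OF t1])
  have qq: "qq > 0" unfolding qq_def by (rule q_pos[OF t1])
  have TT0: "TT i t z (x1 i) \<ge> 0" by (rule TT_nonneg[OF t1])
  show ?thesis
  proof (cases "Q t z = 0 \<or> l = 0")
    case True
    then show ?thesis using TT0 by (auto simp: l_def)
  next
    case False
    then have Qz: "Q t z > 0" and lp: "l > 0" using Q_nonneg[OF t1, of z] l0 by auto
    have Pz: "P t z > 0" using P_pos[OF t1 Qz] .
    have "dkappa t (x1 i) \<noteq> 0" using lp by (auto simp: l_def lam_def sched_rate_def)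
    then have kp: "kappa t (x1 i) > 0" using dkappa_zero[OF t, of "x1 i"] kappa_nonneg[OF t1, of "x1 i"] by force
    have "m i t (x1 i) \<ge> kappa t (x1 i)"
      using p_nonneg[of "x1 i"] kappa_lt1[OF t1, of "x1 i"]
      by (simp add: m_def mix_path_i_def delta_def)
    then have mp: "m i t (x1 i) > 0" using kp by simp
    have "R i t z \<noteq> 0" using Qz Q_split[of t z i] by auto
    then have Rp: "R i t z > 0" using R_nonneg[OF t1, of i z] by simp
    have Qz': "Q t z' > 0" unfolding z'_def using Q_split[of t "z(i:=x1 i)" i] R_upd mp Rp by simp
    have Pz': "P t z' > 0" using P_pos[OF t1 Qz'] .
    define a where "a = ln qq - (ln (P t z' / Q t z') - ln (P t z / Q t z))"
    have ea: "exp a = qq * (P t z / Q t z) / (P t z' / Q t z')"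
      unfolding a_def using qq Qz Pz Qz' Pz' by (simp add: exp_diff mult_ac)
    have TTa: "TT i t z (x1 i) = l * Q t z * exp a"
      unfolding ea TT_def rho_def l_def qq_def z'_def using Qz Pz Qz' Pz' unfolding z'_def
      by (simp add: field_simps)
    have "l * Q t z * (1 + a) \<le> l * Q t z * exp a"
      using lp Qz exp_ge_add_one_self[of a] by (intro mult_left_mono) auto
    then show ?thesis unfolding TTa z'_def[symmetric] l_def[symmetric] qq_def[symmetric] a_def
      by (simp add: algebra_simps)
  qed
qed

lemma pair_ineq:
  assumes t: "t \<in> {0<..<1}"
  shows "lam t (x1 i) * (Q t z * (ln (P t (z(i:=x1 i)) / Q t (z(i:=x1 i))) - ln (P t z / Q t z)))
      + ((\<Sum>y\<in>UNIV. TT i t z y) - Q t z * ex i t z)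
    \<ge> Q t z * (lam t (z i) * q i t z (z i) - (\<Sum>y\<in>UNIV. lam t y * q i t z y)
        + (1 - delta (x1 i) (z i)) * lam t (x1 i) * (1 + ln (q i t z (x1 i))))"
proof -
  have t1: "t \<in> {0..<1}" using t by auto
  have exq: "ex i t z = (\<Sum>y\<in>UNIV. lam t y * q i t z y)" by (simp add: ex_def rho_def)
  show ?thesis
  proof (cases "z i = x1 i")
    case True
    then have zz: "z(i:=x1 i) = z" by auto
    have "(\<Sum>y\<in>UNIV. TT i t z y) \<ge> TT i t z (z i)"
      using TT_nonneg[OF t1] by (intro member_le_sum) auto
    then show ?thesis using True zz TT_self[OF t1, of i z]
      by (simp add: delta_def exq rho_def algebra_simps)
  next
    case False
    have "(\<Sum>y\<in>{z i, x1 i}. TT i t z y) \<le> (\<Sum>y\<in>UNIV. TT i t z y)"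
      using TT_nonneg[OF t1] by (intro sum_mono2) auto
    then have s: "TT i t z (z i) + TT i t z (x1 i) \<le> (\<Sum>y\<in>UNIV. TT i t z y)" using False by simp
    have k: "lam t (x1 i) * (Q t z * (ln (P t (z(i:=x1 i)) / Q t (z(i:=x1 i))) - ln (P t z / Q t z))) + TT i t z (x1 i)
    \<ge> Q t z * (lam t (x1 i) * (1 + ln (q i t z (x1 i))))" by (rule key_ineq[of t z i, OF t False])
    show ?thesis using s k False TT_self[OF t1, of i z]
      by (simp add: delta_def exq rho_def algebra_simps)
  qed
qed

lemma lam_eq: "sched_rate kappa dkappa = lam" by (simp add: lam_def[abs_def])

lemma elbo_eq: "elbo_integrand p kappa dkappa q x1 t =
  (\<Sum>z\<in>UNIV. Q t z * (\<Sum>i\<in>UNIV. lam t (z i) * q i t z (z i) - (\<Sum>y\<in>UNIV. lam t y * q i t z y)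
        + (1 - delta (x1 i) (z i)) * lam t (x1 i) * (1 + ln (q i t z (x1 i)))))"
  unfolding elbo_integrand_def lam_eq Let_def Q_def ..

lemma dF_ge: assumes t: "t \<in> {0<..<1}"
  shows "(\<Sum>x\<in>UNIV. dF t x) \<ge> elbo_integrand p kappa dkappa q x1 t"
proof -
  have t1: "t \<in> {0..<1}" using t by auto
  define L where "L x = ln (P t x / Q t x)" for x
  have "(\<Sum>x\<in>UNIV. dF t x) = (\<Sum>x\<in>UNIV. dQ t x * (L x - 1)) + (\<Sum>x\<in>UNIV. Q t x * dP t x / P t x)"
    by (simp add: dF_def L_def sum.distrib)
  also have "\<dots> = (\<Sum>i\<in>UNIV. \<Sum>z\<in>UNIV. lam t (x1 i) * (Q t z * (L (z(i:=x1 i)) - L z))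
      + ((\<Sum>y\<in>UNIV. TT i t z y) - Q t z * ex i t z))"
  proof -
    have "(\<Sum>x\<in>UNIV. dQ t x * (L x - 1)) = (\<Sum>i\<in>UNIV. \<Sum>z\<in>UNIV. lam t (x1 i) * (Q t z * (L (z(i:=x1 i)) - L z)))"
      unfolding sum_dQ[OF t1] by (simp add: sum_distrib_left)
    then show ?thesis unfolding sum_QdP[OF t1] by (simp add: sum.distrib)
  qed
  also have "\<dots> \<ge> (\<Sum>i\<in>UNIV. \<Sum>z\<in>UNIV. Q t z * (lam t (z i) * q i t z (z i) - (\<Sum>y\<in>UNIV. lam t y * q i t z y)
        + (1 - delta (x1 i) (z i)) * lam t (x1 i) * (1 + ln (q i t z (x1 i)))))"
    unfolding L_def by (intro sum_mono pair_ineq[OF t])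
  also have "(\<Sum>i\<in>UNIV. \<Sum>z\<in>UNIV. Q t z * (lam t (z i) * q i t z (z i) - (\<Sum>y\<in>UNIV. lam t y * q i t z y)
        + (1 - delta (x1 i) (z i)) * lam t (x1 i) * (1 + ln (q i t z (x1 i)))))
      = elbo_integrand p kappa dkappa q x1 t"
    unfolding elbo_eq by (subst sum.swap) (simp add: sum_distrib_left)
  finally show ?thesis .
qed

end

context elbo_setting begin

abbreviation "elbo \<equiv> elbo_integrand p kappa dkappa q x1"
definition FF where "FF t = (\<Sum>x\<in>UNIV. Fx t x)"

lemma FF0: "FF 0 = 0"
proof -
  have "Q 0 x = P 0 x" for x by (simp add: Q_prod P0 m_def mix_path_i_def kappa0)
  then show ?thesis unfolding FF_def Fx_def
    by (intro sum.neutral ballI) (simp add: divide_self_if)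
qed

lemma F_ge: assumes T: "0 < T" "T < 1" and integ: "elbo integrable_on {0..T}"
  shows "integral {0..T} elbo \<le> FF T"
proof -
  define f' where "f' t = (if t \<in> Sx \<or> t = 0 then elbo t else (\<Sum>x\<in>UNIV. dF t x))" for t
  have "(f' has_integral (FF T - FF 0)) {0..T}"
  proof (rule fundamental_theorem_of_calculus_interior_strong[OF Sx_finite])
    show "0 \<le> T" using T by simp
  next
    fix t assume t: "t \<in> {0<..<T} - Sx"
    then have t1: "t \<in> {0<..<1}" "t \<notin> Sx" using T by auto
    have "(FF has_real_derivative (\<Sum>x\<in>UNIV. dF t x)) (at t)"
      unfolding FF_def[abs_def] by (rule DERIV_sum) (rule Fx_deriv[OF t1])
    moreover have "f' t = (\<Sum>x\<in>UNIV. dF t x)" using t1 by (simp add: f'_def)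
    ultimately show "(FF has_vector_derivative f' t) (at t)"
      by (simp add: has_real_derivative_iff_has_vector_derivative)
  next
    show "continuous_on {0..T} FF"
      unfolding FF_def[abs_def]
    proof (rule continuous_on_sum)
      fix x :: "'i \<Rightarrow> 'a"
      show "continuous_on {0..T} (\<lambda>t. Fx t x)"
        using Fx_cont[of T _ x] T by (simp add: continuous_on_eq_continuous_within)
    qed
  qed
  then have hi: "(f' has_integral FF T) {0..T}" by (simp add: FF0)
  have le: "elbo t \<le> f' t" if "t \<in> {0..T}" for t
  proof (cases "t \<in> Sx \<or> t = 0")
    case True then show ?thesis by (simp add: f'_def)
  next
    case False
    then have "t \<in> {0<..<1}" using that T by auto
    then show ?thesis using False dF_ge by (simp add: f'_def)
  qed
  show ?thesis by (rule has_integral_le[OF integrable_integral[OF integ] hi le])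
qed

lemma Fx_upper: assumes t: "t \<in> {0..<1}" and B: "0 < B" "P t x \<le> B"
  shows "Fx t x \<le> Q t x * ln B - Q t x * ln (Q t x)"
proof (cases "Q t x = 0")
  case True then show ?thesis by (simp add: Fx_def)
next
  case False
  then have Qp: "Q t x > 0" using Q_nonneg[OF t, of x] by simp
  have Pp: "P t x > 0" using P_pos[OF t Qp] .
  have r2: "P t x / Q t x \<le> B / Q t x" using B Qp by (simp add: divide_right_mono)
  have "ln (P t x / Q t x) \<le> ln (B / Q t x)" using r2 Pp Qp B by simp
  moreover have "ln (B / Q t x) = ln B - ln (Q t x)" using B Qp by (simp add: ln_div)
  ultimately have "ln (P t x / Q t x) \<le> ln B - ln (Q t x)" by simp
  then have "Q t x * ln (P t x / Q t x) \<le> Q t x * (ln B - ln (Q t x))" using Qp by (intro mult_left_mono) auto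
  then show ?thesis by (simp add: Fx_def right_diff_distrib)
qed

lemma m_lim: "((\<lambda>t. m i t y) \<longlongrightarrow> delta (x1 i) y) (at_left 1)"
proof -
  have "((\<lambda>t. (1 - kappa t (x1 i)) * p y + kappa t (x1 i) * delta (x1 i) y) \<longlongrightarrow> (1 - 1) * p y + 1 * delta (x1 i) y) (at_left 1)"
    by (rule tendsto_add[OF tendsto_mult[OF tendsto_diff[OF tendsto_const kappa_lim] tendsto_const] tendsto_mult[OF kappa_lim tendsto_const]])
  then show ?thesis by (simp add: m_def mix_path_i_def)
qed

lemma Q_lim: "((\<lambda>t. Q t x) \<longlongrightarrow> (if x = x1 then 1 else 0)) (at_left 1)"
proof -
  have "((\<lambda>t. \<Prod>i\<in>UNIV. m i t (x i)) \<longlongrightarrow> (\<Prod>i\<in>UNIV. delta (x1 i) (x i))) (at_left 1)"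
    by (intro tendsto_prod m_lim)
  moreover have "(\<Prod>i\<in>UNIV. delta (x1 i) (x i)) = (if x = x1 then 1 else 0)"
  proof (cases "x = x1")
    case True then show ?thesis by (simp add: delta_def)
  next
    case False
    then obtain i where "x i \<noteq> x1 i" by auto
    then have "delta (x1 i) (x i) = 0" by (simp add: delta_def)
    then show ?thesis using False by (intro trans[OF prod_zero]) auto
  qed
  ultimately show ?thesis by (simp add: Q_prod)
qed

lemma ev_left: "eventually (\<lambda>t. t \<in> {0<..<1}) (at_left (1::real))"
  using eventually_at_left_real[of 0 "1::real"] eventually_at_left_real[of "1::real" 0] by simp

lemma final:
  assumes integ: "set_integrable lborel {0..1::real} elbo"
  shows "P 1 x1 > 0 \<and> ln (P 1 x1) \<ge> (LINT t:{0..1}|lborel. elbo t)"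
proof -
  have I: "(LINT t:{0..1}|lborel. elbo t) = integral {0..1} elbo" "elbo integrable_on {0..1}"
    using set_borel_integral_eq_integral[OF integ] by auto
  define I where "I = integral {0..1} elbo"
  have Glim: "((\<lambda>s. integral {0..s} elbo) \<longlongrightarrow> I) (at_left 1)"
  proof -
    have "continuous_on {0..1} (\<lambda>s. integral {0..s} elbo)"
      by (rule indefinite_integral_continuous_1[OF I(2)])
    then have "((\<lambda>s. integral {0..s} elbo) \<longlongrightarrow> integral {0..1} elbo) (at 1 within {0..1})"
      by (simp add: continuous_on_def)
    then show ?thesis by (simp add: at_within_Icc_at_left I_def)
  qed
  have evG: "eventually (\<lambda>t. integral {0..t} elbo \<le> FF t) (at_left 1)"
    using ev_left
  proof eventually_elim
    case (elim t)
    then show ?case using F_ge[of t] integrable_on_subinterval[OF I(2), of 0 t] by auto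
  qed
  have Pnn: "P 1 x \<ge> 0" for x
  proof (rule tendsto_lowerbound[OF P_lim])
    show "eventually (\<lambda>t. P t x \<ge> 0) (at_left 1)" using ev_left by eventually_elim (auto intro: P_nonneg)
  qed simp
  define B where "B = (\<Sum>x\<in>UNIV. \<bar>P 1 x\<bar>) + 1"
  have Bp: "B > 0" unfolding B_def by (simp add: add_nonneg_pos sum_nonneg)
  have evB: "eventually (\<lambda>t. \<forall>x. P t x \<le> B) (at_left 1)"
  proof (rule eventually_all_finite)
    fix x
    have "P 1 x < B" unfolding B_def using member_le_sum[of x UNIV "\<lambda>x. \<bar>P 1 x\<bar>"] by simp
    from order_tendstoD(2)[OF P_lim this] show "eventually (\<lambda>t. P t x \<le> B) (at_left 1)"
      by (rule eventually_mono) simp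
  qed
  have evQ: "eventually (\<lambda>t. Q t x1 > 0) (at_left 1)"
    using order_tendstoD(1)[OF Q_lim[of x1], of 0] by simp
  define U where "U t = Q t x1 * ln (P t x1) - Q t x1 * ln (Q t x1) +
        (\<Sum>x\<in>UNIV - {x1}. Q t x * ln B - Q t x * ln (Q t x))" for t
  have evU: "eventually (\<lambda>t. FF t \<le> U t) (at_left 1)"
    using ev_left evB evQ
  proof eventually_elim
    case (elim t)
    then have t1: "t \<in> {0..<1}" by auto
    have Pp: "P t x1 > 0" using P_pos[OF t1 elim(3)] .
    have "FF t = Fx t x1 + (\<Sum>x\<in>UNIV - {x1}. Fx t x)"
      unfolding FF_def by (simp add: sum.remove)
    also have "Fx t x1 = Q t x1 * ln (P t x1) - Q t x1 * ln (Q t x1)"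
      using Pp elim(3) by (simp add: Fx_def ln_div right_diff_distrib)
    also have "(\<Sum>x\<in>UNIV - {x1}. Fx t x) \<le> (\<Sum>x\<in>UNIV - {x1}. Q t x * ln B - Q t x * ln (Q t x))"
      using elim(2) Bp by (intro sum_mono Fx_upper[OF t1]) auto
    finally show ?case by (simp add: U_def)
  qed
  have xl: "((\<lambda>t. Q t x * ln (Q t x)) \<longlongrightarrow> 0) (at_left 1)" for x
  proof -
    have "((\<lambda>t. (\<lambda>u::real. u * ln u) (Q t x)) \<longlongrightarrow> (\<lambda>u::real. u * ln u) (if x = x1 then 1 else 0)) (at_left 1)"
    proof (rule continuous_on_tendsto_compose[OF xlnx_cont Q_lim])
      show "(if x = x1 then 1 else 0) \<in> {0::real..}" by simp
      show "\<forall>\<^sub>F t in at_left 1. Q t x \<in> {0..}"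
        using ev_left by eventually_elim (auto intro: Q_nonneg)
    qed
    then show ?thesis by (simp split: if_splits)
  qed
  have rest: "((\<lambda>t. (\<Sum>x\<in>UNIV - {x1}. Q t x * ln B - Q t x * ln (Q t x))) \<longlongrightarrow> 0) (at_left 1)"
  proof -
    have "((\<lambda>t. Q t x * ln B - Q t x * ln (Q t x)) \<longlongrightarrow> 0) (at_left 1)" if "x \<in> UNIV - {x1}" for x
      using tendsto_diff[OF tendsto_mult[OF Q_lim[of x] tendsto_const[of "ln B"]] xl[of x]] that by simp
    then have "((\<lambda>t. (\<Sum>x\<in>UNIV - {x1}. Q t x * ln B - Q t x * ln (Q t x))) \<longlongrightarrow> (\<Sum>x\<in>UNIV - {x1}. 0)) (at_left 1)"
      by (rule tendsto_sum)
    then show ?thesis by simp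
  qed
  have Q1: "((\<lambda>t. Q t x1) \<longlongrightarrow> 1) (at_left 1)" using Q_lim[of x1] by simp
  have P1pos: "P 1 x1 > 0"
  proof (rule ccontr)
    assume "\<not> P 1 x1 > 0"
    then have P10: "P 1 x1 = 0" using Pnn[of x1] by simp
    have evPp: "eventually (\<lambda>t. P t x1 > 0) (at_left 1)"
      using ev_left evQ by eventually_elim (auto intro: P_pos)
    have "filterlim (\<lambda>t. P t x1) (at_right 0) (at_left 1)"
      unfolding filterlim_at
    proof (intro conjI)
      show "eventually (\<lambda>t. P t x1 \<in> {0<..} \<and> P t x1 \<noteq> 0) (at_left 1)"
        using evPp by eventually_elim auto
      show "((\<lambda>t. P t x1) \<longlongrightarrow> 0) (at_left 1)" using P_lim[of x1] P10 by simp
    qed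
    then have lnP: "filterlim (\<lambda>t. ln (P t x1)) at_bot (at_left 1)"
      by (rule filterlim_compose[OF ln_at_0])
    have "filterlim (\<lambda>t. Q t x1 * ln (P t x1)) at_bot (at_left 1)"
      by (rule filterlim_tendsto_pos_mult_at_bot[OF Q1 _ lnP]) simp
    moreover have "((\<lambda>t. - (Q t x1 * ln (Q t x1)) + (\<Sum>x\<in>UNIV - {x1}. Q t x * ln B - Q t x * ln (Q t x))) \<longlongrightarrow> - 0 + 0) (at_left 1)"
      by (rule tendsto_add[OF tendsto_minus[OF xl] rest])
    ultimately have "filterlim (\<lambda>t. (- (Q t x1 * ln (Q t x1)) + (\<Sum>x\<in>UNIV - {x1}. Q t x * ln B - Q t x * ln (Q t x))) + Q t x1 * ln (P t x1)) at_bot (at_left 1)"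
      by (subst filterlim_tendsto_add_at_bot_iff)
    moreover have "(\<lambda>t. (- (Q t x1 * ln (Q t x1)) + (\<Sum>x\<in>UNIV - {x1}. Q t x * ln B - Q t x * ln (Q t x))) + Q t x1 * ln (P t x1)) = U"
      by (rule ext) (simp add: U_def)
    ultimately have Ubot: "filterlim U at_bot (at_left 1)" by simp
    have "eventually (\<lambda>t. U t < I - 1) (at_left 1)"
      using Ubot unfolding filterlim_at_bot_dense by blast
    moreover have "eventually (\<lambda>t. integral {0..t} elbo > I - 1) (at_left 1)"
      using order_tendstoD(1)[OF Glim, of "I - 1"] by simp
    ultimately have "eventually (\<lambda>t. False) (at_left (1::real))"
      using evG evU by eventually_elim auto
    then show False by (simp add: trivial_limit_at_left_real)
  qed
  have Ulim: "(U \<longlongrightarrow> 1 * ln (P 1 x1) - 0 + 0) (at_left 1)"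
    unfolding U_def[abs_def] using P1pos
    by (intro tendsto_add[OF tendsto_diff[OF tendsto_mult[OF Q1 tendsto_ln[OF P_lim]] xl] rest]) auto
  have "I \<le> 1 * ln (P 1 x1) - 0 + 0"
  proof (rule tendsto_le[OF _ Ulim Glim])
    show "eventually (\<lambda>t. integral {0..t} elbo \<le> U t) (at_left 1)"
      using evG evU by eventually_elim auto
  qed (simp add: trivial_limit_at_left_real)
  then show ?thesis using P1pos I(1) by (simp add: I_def)
qed

end

theorem mainTheorem11:
  fixes p :: "'a::finite \<Rightarrow> real"
    and kappa dkappa :: "real \<Rightarrow> 'a \<Rightarrow> real"
    and q :: "'i::finite \<Rightarrow> real \<Rightarrow> ('i \<Rightarrow> 'a) \<Rightarrow> 'a \<Rightarrow> real"
    and P :: "real \<Rightarrow> ('i \<Rightarrow> 'a) \<Rightarrow> real"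
    and x1 :: "'i \<Rightarrow> 'a"
  assumes p_nonneg: "\<And>y. p y \<ge> 0"
    and p_sum: "(\<Sum>y\<in>UNIV. p y) = 1"
    and kappa0: "\<And>y. kappa 0 y = 0"
    and kappa_lim: "\<And>y. ((\<lambda>t. kappa t y) \<longlongrightarrow> 1) (at_left 1)"
    and kappa_mono: "\<And>y. mono_on {0..<1} (\<lambda>t. kappa t y)"
    and kappa_lt1: "\<And>y t. t \<in> {0..<1} \<Longrightarrow> kappa t y < 1"
    and kappa_deriv: "\<And>y t. t \<in> {0..<1} \<Longrightarrow>
           ((\<lambda>s. kappa s y) has_real_derivative dkappa t y) (at t within {0..<1})"
    and dkappa_cont: "\<And>y. continuous_on {0..<1} (\<lambda>t. dkappa t y)"
    and q_pos: "\<And>i t z y. t \<in> {0..<1} \<Longrightarrow> q i t z y > 0"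
    and q_sum: "\<And>i t z. t \<in> {0..<1} \<Longrightarrow> (\<Sum>y\<in>UNIV. q i t z y) = 1"
    and q_cont: "\<And>i z y. continuous_on {0..<1} (\<lambda>t. q i t z y)"
    and P_ctmc: "ctmc_marginal
                   (fact_vel (model_vel_i (sched_rate kappa dkappa) q))
                   (\<lambda>x. \<Prod>i\<in>UNIV. p (x i)) P"
    and integrable: "set_integrable lborel {0..1::real} (elbo_integrand p kappa dkappa q x1)"
  shows "P 1 x1 > 0 \<and>
         ln (P 1 x1) \<ge> (LINT t:{0..1}|lborel. elbo_integrand p kappa dkappa q x1 t)"
proof -
  interpret elbo_setting p kappa dkappa q P x1
    by (rule elbo_setting.intro) (fact p_nonneg p_sum kappa0 kappa_lim kappa_mono kappa_lt1 kappa_deriv dkappa_cont q_pos q_sum q_cont P_ctmc)+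
  show ?thesis by (rule final[OF integrable])
qed

end
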